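(* Let $D$ be a connected link diagram, let $G$ be its Tait graph (with the sign convention and choice of checkerboard coloring described in the context), and let $\mathbb{G}$ be its all-$A$ ribbon graph. Then there is a one-to-one correspondence between the quasi-trees of $\mathbb{G}$ and the spanning trees of $G$, under which a quasi-tree $\mathbb{Q}_j$ of genus $j$ corresponds to a spanning tree $T_v$ with exactly $v$ positive edges, where $$ v+j=\frac{V(G)+E_+(G)-V(\mathbb{G})}{2}. $$
   Context: Let $D$ be a connected link diagram in the plane. Each crossing can be smoothed in two ways, the $A$-smoothing and the $B$-smoothing (Kauffman's convention). A state $s$ of $D$ assigns $A$ or $B$ to each crossing; $|s|$ denotes the number of circles in the resulting smoothing. The all-$A$ state assigns $A$ to every crossing. Tait graph: checkerboard color the complementary regions of $D$. The Tait graph has a vertex for each shaded region and an edge for each crossing, joining the shaded regions that meet at that crossing. An edge is positive if the $A$-smoothing of the corresponding crossing joins the two shaded regions of its endpoints, and negative otherwise. The two checkerboard colorings give planar dual Tait graphs; $G$ denotes the one with $E_+(G)\ge E_-(G)$, where $E_\pm(G)$ is the number of positive/negative edges. $V(G)$ is the number of vertices of $G$. All-$A$ ribbon graph $\mathbb{G}$: its vertices are the circles of the all-$A$ state of $D$ (so $V(\mathbb{G})$ is the number of such circles), and it has one edge for each crossing, joining the state circle(s) containing the two arcs of the $A$-smoothing at that crossing. Orient each state circle counterclockwise if it is nested inside an even number of other state circles and clockwise otherwise; the cyclic order of edges at a vertex is the order in which their attaching points are met traversing the circle in this direction. Equivalently, $\mathbb{G}$ is the orientable surface made of one disk per vertex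 and one untwisted band per edge, realizing these cyclic orders. A spanning subgraph $\mathbb{H}\subset\mathbb{G}$ consists of all vertices of $\mathbb{G}$ and a subset of its edges, with the induced cyclic orders. $F(\mathbb{H})$ is the number of faces of $\mathbb{H}$, i.e. the number of boundary components of the orientable surface formed by the vertex disks and the bands of the edges of $\mathbb{H}$ (equivalently, the number of complementary regions of $\mathbb{H}$ in the closed orientable surface of minimal genus in which it embeds). A quasi-tree is a spanning subgraph $\mathbb{Q}$ with $F(\mathbb{Q})=1$; its genus is $j=(1-V(\mathbb{Q})+E(\mathbb{Q}))/2$, where $E(\mathbb{Q})$ is its number of edges. *)

theory Defs
  imports Complex_Main
begin

text \<open>
Combinatorial model of a connected link diagram with at least one crossing.
The diagram is a 4-valent plane map given by a finite set H of darts (half-edges),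
a permutation sg (counterclockwise rotation of the darts around each crossing) and a
fixed-point-free involution al (the two ends of an edge of the projection).
Crossings are the sg-orbits (4 darts each); faces (complementary regions) are the
orbits of al \<circ> sg; the face of a dart d is the region containing the corner from d
counterclockwise to sg d.  The predicate ov marks the two darts of the
over-strand at each crossing.  Planarity is Euler's formula V - E + F = 2.
\<close>

definition ld_orbit :: "('a \<Rightarrow> 'a) \<Rightarrow> 'a \<Rightarrow> 'a set" where
  "ld_orbit f x = {(f ^^ n) x | n. True}"

definition ld_norbits :: "('a \<Rightarrow> 'a) \<Rightarrow> 'a set \<Rightarrow> nat" where
  "ld_norbits f A = card (ld_orbit f ` A)"

definition ld_gen :: "'d set \<Rightarrow> ('d \<Rightarrow> 'd) \<Rightarrow> ('d \<Rightarrow> 'd) \<Rightarrow> ('d \<times> 'd) set" where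
  "ld_gen H sg al = {(d, sg d) | d. d \<in> H} \<union> {(d, al d) | d. d \<in> H}"

definition link_diagram ::
  "'d set \<Rightarrow> ('d \<Rightarrow> 'd) \<Rightarrow> ('d \<Rightarrow> 'd) \<Rightarrow> ('d \<Rightarrow> bool) \<Rightarrow> bool" where
  "link_diagram H sg al ov \<longleftrightarrow>
     finite H \<and> H \<noteq> {} \<and> bij_betw sg H H \<and> bij_betw al H H \<and>
     (\<forall>d\<in>H. al (al d) = d \<and> al d \<noteq> d \<and>
             (sg ^^ 4) d = d \<and> sg d \<noteq> d \<and> (sg ^^ 2) d \<noteq> d \<and>
             (ov (sg d) \<longleftrightarrow> \<not> ov d)) \<and>
     (\<forall>d\<in>H. \<forall>e\<in>H. (d, e) \<in> (ld_gen H sg al)\<^sup>*) \<and>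
     int (ld_norbits sg H) - int (card H div 2) + int (ld_norbits (al \<circ> sg) H) = 2"

definition crossings :: "'d set \<Rightarrow> ('d \<Rightarrow> 'd) \<Rightarrow> 'd set set" where
  "crossings H sg = ld_orbit sg ` H"

definition face_of :: "('d \<Rightarrow> 'd) \<Rightarrow> ('d \<Rightarrow> 'd) \<Rightarrow> 'd \<Rightarrow> 'd set" where
  "face_of sg al d = ld_orbit (al \<circ> sg) d"

text \<open>A checkerboard colouring: sh d says whether the face of (the corner at) d is shaded;
  it is constant on faces and alternates around each crossing.\<close>

definition checkerboard :: "'d set \<Rightarrow> ('d \<Rightarrow> 'd) \<Rightarrow> ('d \<Rightarrow> 'd) \<Rightarrow> ('d \<Rightarrow> bool) \<Rightarrow> bool" where
  "checkerboard H sg al sh \<longleftrightarrow>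
     (\<forall>d\<in>H. sh (al (sg d)) = sh d \<and> sh (sg d) \<noteq> sh d)"

text \<open>Tait graph of the shading sh: vertices are the shaded faces, edges are the crossings,
  a crossing joining the shaded faces meeting at it.  The A-regions at a crossing are the
  corners from an over-dart counterclockwise to the next (under) dart; the A-smoothing joins
  them, so an edge is positive iff its A-corners are shaded.\<close>

definition tait_vertices :: "'d set \<Rightarrow> ('d \<Rightarrow> 'd) \<Rightarrow> ('d \<Rightarrow> 'd) \<Rightarrow> ('d \<Rightarrow> bool) \<Rightarrow> 'd set set" where
  "tait_vertices H sg al sh = face_of sg al ` {d \<in> H. sh d}"

definition tait_ends :: "('d \<Rightarrow> 'd) \<Rightarrow> ('d \<Rightarrow> 'd) \<Rightarrow> ('d \<Rightarrow> bool) \<Rightarrow> 'd set \<Rightarrow> 'd set set" where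
  "tait_ends sg al sh c = face_of sg al ` {d \<in> c. sh d}"

definition tait_positive :: "('d \<Rightarrow> bool) \<Rightarrow> ('d \<Rightarrow> bool) \<Rightarrow> 'd set \<Rightarrow> bool" where
  "tait_positive ov sh c \<longleftrightarrow> (\<exists>d\<in>c. ov d \<and> sh d)"

definition E_plus :: "'d set \<Rightarrow> ('d \<Rightarrow> 'd) \<Rightarrow> ('d \<Rightarrow> bool) \<Rightarrow> ('d \<Rightarrow> bool) \<Rightarrow> nat" where
  "E_plus H sg ov sh = card {c \<in> crossings H sg. tait_positive ov sh c}"

definition E_minus :: "'d set \<Rightarrow> ('d \<Rightarrow> 'd) \<Rightarrow> ('d \<Rightarrow> bool) \<Rightarrow> ('d \<Rightarrow> bool) \<Rightarrow> nat" where
  "E_minus H sg ov sh = card {c \<in> crossings H sg. \<not> tait_positive ov sh c}"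

definition tait_connected ::
  "'d set \<Rightarrow> ('d \<Rightarrow> 'd) \<Rightarrow> ('d \<Rightarrow> 'd) \<Rightarrow> ('d \<Rightarrow> bool) \<Rightarrow> 'd set set \<Rightarrow> bool" where
  "tait_connected H sg al sh T \<longleftrightarrow>
     (\<forall>u\<in>tait_vertices H sg al sh. \<forall>v\<in>tait_vertices H sg al sh.
        (u, v) \<in> {(x, y). \<exists>c\<in>T. x \<in> tait_ends sg al sh c \<and> y \<in> tait_ends sg al sh c}\<^sup>*)"

text \<open>Spanning tree of the Tait (multi)graph, given by its edge set: a spanning subgraph that
  is connected and minimally so (every edge is a bridge; in particular no loops or cycles).\<close>

definition tait_spanning_tree ::
  "'d set \<Rightarrow> ('d \<Rightarrow> 'd) \<Rightarrow> ('d \<Rightarrow> 'd) \<Rightarrow> ('d \<Rightarrow> bool) \<Rightarrow> 'd set set \<Rightarrow> bool" where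
  "tait_spanning_tree H sg al sh T \<longleftrightarrow>
     T \<subseteq> crossings H sg \<and> tait_connected H sg al sh T \<and>
     (\<forall>e\<in>T. \<not> tait_connected H sg al sh (T - {e}))"

text \<open>All-A state.  At a crossing with over-darts N,S and under-darts W = sg N, E = sg S,
  the A-smoothing joins N with E = sg^3 N and W with S = sg W.\<close>

definition partnerA :: "('d \<Rightarrow> 'd) \<Rightarrow> ('d \<Rightarrow> bool) \<Rightarrow> 'd \<Rightarrow> 'd" where
  "partnerA sg ov d = (if ov d then (sg ^^ 3) d else sg d)"

definition stepA :: "('d \<Rightarrow> 'd) \<Rightarrow> ('d \<Rightarrow> 'd) \<Rightarrow> ('d \<Rightarrow> bool) \<Rightarrow> 'd \<Rightarrow> 'd" where
  "stepA sg al ov d = partnerA sg ov (al d)"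

definition allA_circles :: "'d set \<Rightarrow> ('d \<Rightarrow> 'd) \<Rightarrow> ('d \<Rightarrow> 'd) \<Rightarrow> ('d \<Rightarrow> bool) \<Rightarrow> 'd set set" where
  "allA_circles H sg al ov =
     H // (({(d, al d) | d. d \<in> H} \<union> {(d, partnerA sg ov d) | d. d \<in> H})\<^sup>*)"

definition V_ribbon :: "'d set \<Rightarrow> ('d \<Rightarrow> 'd) \<Rightarrow> ('d \<Rightarrow> 'd) \<Rightarrow> ('d \<Rightarrow> bool) \<Rightarrow> nat" where
  "V_ribbon H sg al ov = card (allA_circles H sg al ov)"

text \<open>A dart d with stepA d describes traversing the A-arc
  {al d, stepA d}; the left side of this traversal is the face of d.  Each state circle is
  oriented (counterclockwise iff nested in an even number of circles) exactly so that the
  faces on its left have the colour opposite to the colour of the unbounded region, whose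
  corner contains the dart ou.  Ribbon darts (attaching points of edges) are the darts
  traversing an A-arc in this orientation; the cyclic order at a circle is given by stepA.\<close>

definition rdarts :: "'d set \<Rightarrow> ('d \<Rightarrow> bool) \<Rightarrow> 'd \<Rightarrow> 'd set" where
  "rdarts H sh ou = {d \<in> H. sh d \<noteq> sh ou}"

text \<open>The other end of the edge (crossing) attached at ribbon dart d: the oriented traversal of
  the other A-arc at the same crossing.\<close>

definition redge ::
  "'d set \<Rightarrow> ('d \<Rightarrow> 'd) \<Rightarrow> ('d \<Rightarrow> 'd) \<Rightarrow> ('d \<Rightarrow> bool) \<Rightarrow> ('d \<Rightarrow> bool) \<Rightarrow> 'd \<Rightarrow> 'd \<Rightarrow> 'd" where
  "redge H sg al ov sh ou d =
     (if al ((sg ^^ 2) (al d)) \<in> rdarts H sh ou then al ((sg ^^ 2) (al d))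
      else al ((sg ^^ 2) (stepA sg al ov d)))"

definition rsub :: "'d set \<Rightarrow> ('d \<Rightarrow> 'd) \<Rightarrow> ('d \<Rightarrow> 'd) \<Rightarrow> ('d \<Rightarrow> bool) \<Rightarrow> 'd \<Rightarrow> 'd set set \<Rightarrow> 'd set" where
  "rsub H sg al sh ou S = {d \<in> rdarts H sh ou. ld_orbit sg (al d) \<in> S}"

text \<open>Induced cyclic order of the subgraph: next attaching point of an edge of S.\<close>

definition rrot ::
  "'d set \<Rightarrow> ('d \<Rightarrow> 'd) \<Rightarrow> ('d \<Rightarrow> 'd) \<Rightarrow> ('d \<Rightarrow> bool) \<Rightarrow> ('d \<Rightarrow> bool) \<Rightarrow> 'd \<Rightarrow> 'd set set \<Rightarrow> 'd \<Rightarrow> 'd" where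
  "rrot H sg al ov sh ou S d =
     (stepA sg al ov ^^ (LEAST k. 0 < k \<and> (stepA sg al ov ^^ k) d \<in> rsub H sg al sh ou S)) d"

text \<open>Number of faces (boundary components) of the spanning ribbon subgraph with edge set S:
  orbits of the face permutation on its darts, plus one for each vertex without edges.\<close>

definition ribbon_faces ::
  "'d set \<Rightarrow> ('d \<Rightarrow> 'd) \<Rightarrow> ('d \<Rightarrow> 'd) \<Rightarrow> ('d \<Rightarrow> bool) \<Rightarrow> ('d \<Rightarrow> bool) \<Rightarrow> 'd \<Rightarrow> 'd set set \<Rightarrow> nat" where
  "ribbon_faces H sg al ov sh ou S =
     card (ld_orbit (rrot H sg al ov sh ou S \<circ> redge H sg al ov sh ou) ` rsub H sg al sh ou S)
     + card {C \<in> allA_circles H sg al ov. C \<inter> rsub H sg al sh ou S = {}}"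

definition quasi_tree ::
  "'d set \<Rightarrow> ('d \<Rightarrow> 'd) \<Rightarrow> ('d \<Rightarrow> 'd) \<Rightarrow> ('d \<Rightarrow> bool) \<Rightarrow> ('d \<Rightarrow> bool) \<Rightarrow> 'd \<Rightarrow> 'd set set \<Rightarrow> bool" where
  "quasi_tree H sg al ov sh ou Q \<longleftrightarrow>
     Q \<subseteq> crossings H sg \<and> ribbon_faces H sg al ov sh ou Q = 1"

definition qt_genus :: "'d set \<Rightarrow> ('d \<Rightarrow> 'd) \<Rightarrow> ('d \<Rightarrow> 'd) \<Rightarrow> ('d \<Rightarrow> bool) \<Rightarrow> 'd set set \<Rightarrow> real" where
  "qt_genus H sg al ov Q = (1 - real (V_ribbon H sg al ov) + real (card Q)) / 2"

end

theory Submission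
  imports Defs
begin



definition perm_on :: "('a \<Rightarrow> 'a) \<Rightarrow> 'a set \<Rightarrow> bool" where
  "perm_on p A \<longleftrightarrow> finite A \<and> (\<forall>x\<in>A. p x \<in> A) \<and> inj_on p A"

lemma po_in: "perm_on p A \<Longrightarrow> x \<in> A \<Longrightarrow> p x \<in> A"
  by (simp add: perm_on_def)

lemma po_funpow_in: "perm_on p A \<Longrightarrow> x \<in> A \<Longrightarrow> (p ^^ n) x \<in> A"
  by (induction n) (auto simp: perm_on_def)

lemma orbit_self [simp]: "x \<in> ld_orbit p x"
  unfolding ld_orbit_def by (auto intro: exI[of _ 0])

lemma funpow_in_ld_orbit [simp]: "(p ^^ n) x \<in> ld_orbit p x"
  unfolding ld_orbit_def by auto

lemma p_in_orbit [simp]: "p x \<in> ld_orbit p x"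
  using funpow_in_ld_orbit[where n=1 and p=p and x=x] by simp

lemma ld_orbit_sub: "perm_on p A \<Longrightarrow> x \<in> A \<Longrightarrow> ld_orbit p x \<subseteq> A"
  unfolding ld_orbit_def by (auto intro: po_funpow_in)

lemma orbit_mono: "y \<in> ld_orbit p x \<Longrightarrow> ld_orbit p y \<subseteq> ld_orbit p x"
proof -
  assume "y \<in> ld_orbit p x"
  then obtain m where m: "y = (p ^^ m) x" unfolding ld_orbit_def by auto
  show ?thesis unfolding ld_orbit_def
  proof
    fix z assume "z \<in> {(p ^^ n) y |n. True}"
    then obtain n where "z = (p ^^ n) y" by auto
    then have "z = (p ^^ (n + m)) x" by (simp add: m funpow_add)
    then show "z \<in> {(p ^^ n) x |n. True}" by auto
  qed
qed

lemma funpow_inj_on: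
  assumes "perm_on p A" "a \<in> A" "b \<in> A" "(p ^^ i) a = (p ^^ i) b"
  shows "a = b"
  using assms(2-4)
proof (induction i arbitrary: a b)
  case 0 then show ?case by simp
next
  case (Suc i)
  have "(p ^^ i) (p a) = (p ^^ i) (p b)" using Suc.prems(3) by (metis funpow_Suc_right comp_apply)
  then have "p a = p b" using Suc.IH po_in[OF assms(1)] Suc.prems by blast
  then show ?case using assms(1) Suc.prems unfolding perm_on_def inj_on_def by blast
qed

lemma po_period:
  assumes "perm_on p A" "x \<in> A"
  shows "\<exists>n>0. (p ^^ n) x = x"
proof -
  have fin: "finite A" using assms perm_on_def by blast
  have "\<not> inj_on (\<lambda>n. (p ^^ n) x) {0..card A}"
  proof
    assume inj: "inj_on (\<lambda>n. (p ^^ n) x) {0..card A}"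
    have "(\<lambda>n. (p ^^ n) x) ` {0..card A} \<subseteq> A" using po_funpow_in[OF assms] by auto
    then have "card ((\<lambda>n. (p ^^ n) x) ` {0..card A}) \<le> card A" using fin card_mono by blast
    moreover have "card ((\<lambda>n. (p ^^ n) x) ` {0..card A}) = card A + 1"
      using card_image[OF inj] by simp
    ultimately show False by simp
  qed
  then obtain i j where ij: "i \<in> {0..card A}" "j \<in> {0..card A}" "i \<noteq> j" "(p ^^ i) x = (p ^^ j) x"
    unfolding inj_on_def by blast
  then have "\<exists>i j. i < j \<and> (p ^^ i) x = (p ^^ j) x"
    by (metis linorder_neqE_nat)
  then obtain i j where ij2: "i < j" "(p ^^ i) x = (p ^^ j) x" by blast
  have "(p ^^ i) ((p ^^ (j - i)) x) = (p ^^ i) x"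
    using ij2 by (simp add: funpow_add[symmetric, unfolded comp_def] add.commute[of i] ,
        metis le_add_diff_inverse less_or_eq_imp_le funpow_add comp_apply)
  then have "(p ^^ (j - i)) x = x"
    using funpow_inj_on[OF assms(1) po_funpow_in[OF assms] assms(2)] by blast
  then show ?thesis using ij2 by (intro exI[of _ "j - i"]) auto
qed

lemma funpow_period_mult: "(p ^^ N) x = x \<Longrightarrow> (p ^^ (N * m)) x = x"
  by (induction m) (auto simp: funpow_add)

lemma orbit_back:
  assumes "perm_on p A" "x \<in> A" "y \<in> ld_orbit p x"
  shows "x \<in> ld_orbit p y"
proof -
  obtain m where m: "y = (p ^^ m) x" using assms(3) unfolding ld_orbit_def by auto
  obtain N where N: "N > 0" "(p ^^ N) x = x" using po_period[OF assms(1,2)] by blast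
  have "m \<le> N * m" using N by simp
  have "(p ^^ (N * m - m)) y = (p ^^ (N * m - m + m)) x" by (simp add: m funpow_add)
  also have "\<dots> = x" using \<open>m \<le> N * m\<close> funpow_period_mult[OF N(2)] by simp
  finally show ?thesis unfolding ld_orbit_def by (auto intro!: exI[of _ "N * m - m"])
qed

lemma orbit_eq:
  assumes "perm_on p A" "x \<in> A" "y \<in> ld_orbit p x"
  shows "ld_orbit p y = ld_orbit p x"
  using orbit_mono[OF assms(3)] orbit_mono[OF orbit_back[OF assms]] by blast

lemma orbit_step_eq:
  assumes "perm_on p A" "x \<in> A"
  shows "ld_orbit p (p x) = ld_orbit p x"
  by (rule orbit_eq[OF assms]) (metis p_in_orbit)

lemma orbits_disj:
  assumes "perm_on p A" "x \<in> A" "y \<in> A" "ld_orbit p x \<inter> ld_orbit p y \<noteq> {}"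
  shows "ld_orbit p x = ld_orbit p y"
proof -
  obtain z where "z \<in> ld_orbit p x" "z \<in> ld_orbit p y" using assms(4) by blast
  then show ?thesis using orbit_eq[OF assms(1,2)] orbit_eq[OF assms(1,3)] by metis
qed

lemma orbit_mem_iff:
  assumes "perm_on p A" "x \<in> A" "y \<in> A"
  shows "y \<in> ld_orbit p x \<longleftrightarrow> ld_orbit p y = ld_orbit p x"
  using orbit_eq[OF assms(1,2)] orbit_self by metis

lemma po_surj:
  assumes "perm_on p A" "x \<in> A"
  shows "\<exists>y\<in>A. p y = x"
proof -
  have "p ` A = A" using assms(1) unfolding perm_on_def
    by (meson endo_inj_surj image_subsetI)
  then show ?thesis using assms(2) by (metis imageE)
qed

lemma po_pre_orbit:
  assumes "perm_on p A" "w \<in> A" "x \<in> ld_orbit p w"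
  shows "\<exists>y\<in>ld_orbit p w. p y = x"
proof -
  have xA: "x \<in> A" using ld_orbit_sub[OF assms(1,2)] assms(3) by blast
  obtain y where y: "y \<in> A" "p y = x" using po_surj[OF assms(1) xA] by blast
  have "ld_orbit p y = ld_orbit p x" using orbit_step_eq[OF assms(1) y(1)] y by simp
  also have "\<dots> = ld_orbit p w" using orbit_eq[OF assms] .
  finally have "y \<in> ld_orbit p w" using orbit_self by metis
  then show ?thesis using y by blast
qed

lemma orbit_cong_agree:
  assumes "\<forall>z\<in>ld_orbit f x. f z = g z"
  shows "ld_orbit f x = ld_orbit g x"
proof -
  have "(f ^^ n) x = (g ^^ n) x" for n
  proof (induction n)
    case 0 then show ?case by simp
  next
    case (Suc n)
    have "(f ^^ Suc n) x = f ((f ^^ n) x)" by simp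
    also have "\<dots> = g ((f ^^ n) x)" using assms funpow_in_ld_orbit[where n=n and p=f and x=x] by blast
    finally show ?case using Suc by simp
  qed
  then show ?thesis unfolding ld_orbit_def by auto
qed

lemma orbit_closed_sub:
  assumes "x \<in> S" "\<forall>z\<in>S. f z \<in> S"
  shows "ld_orbit f x \<subseteq> S"
proof -
  have "(f ^^ n) x \<in> S" for n by (induction n) (use assms in auto)
  then show ?thesis unfolding ld_orbit_def by auto
qed

lemma orbit_cong_set:
  assumes "x \<in> S" "\<forall>z\<in>S. f z \<in> S" "\<forall>z\<in>S. f z = g z"
  shows "ld_orbit f x = ld_orbit g x"
  using orbit_cong_agree orbit_closed_sub[OF assms(1,2)] assms(3) by (metis subsetD)

lemma orbit_inverse_eq:
  assumes "perm_on p A" "perm_on q A" "\<forall>x\<in>A. q (p x) = x" "x \<in> A"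
  shows "ld_orbit p x = ld_orbit q x"
proof -
  have pq: "\<forall>x\<in>A. p (q x) = x"
  proof
    fix x assume "x \<in> A"
    then obtain y where "y \<in> A" "p y = x" using po_surj[OF assms(1)] by blast
    then show "p (q x) = x" using assms(3) by auto
  qed
  have sub: "ld_orbit f x \<subseteq> ld_orbit g x"
    if f: "perm_on f A" and g: "perm_on g A" and fg: "\<forall>x\<in>A. g (f x) = x" and x: "x \<in> A" for f g x
  proof -
    have "(f ^^ n) x \<in> ld_orbit g x" for n
    proof (induction n)
      case 0 then show ?case by (simp add: orbit_self)
    next
      case (Suc n)
      let ?y = "(f ^^ n) x"
      have yA: "?y \<in> A" using po_funpow_in[OF f x] .
      have "?y \<in> ld_orbit g (f ?y)" using fg yA by (metis p_in_orbit)
      then have "ld_orbit g ?y = ld_orbit g (f ?y)" using orbit_eq[OF g po_in[OF f yA]] by blast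
      then have "f ?y \<in> ld_orbit g ?y" using orbit_self by metis
      moreover have "ld_orbit g ?y = ld_orbit g x" using orbit_eq[OF g x Suc] .
      ultimately show ?case by simp
    qed
    then show ?thesis unfolding ld_orbit_def by auto
  qed
  show ?thesis using sub[OF assms(1,2,3,4)] sub[OF assms(2,1) pq assms(4)] by blast
qed

definition swp :: "('a \<Rightarrow> 'a) \<Rightarrow> 'a \<Rightarrow> 'a \<Rightarrow> 'a \<Rightarrow> 'a" where
  "swp p x1 x2 z = (if z = x1 then p x2 else if z = x2 then p x1 else p z)"

lemma swp_perm:
  assumes "perm_on p A" "x1 \<in> A" "x2 \<in> A" "x1 \<noteq> x2"
  shows "perm_on (swp p x1 x2) A"
  using assms unfolding perm_on_def inj_on_def swp_def by (smt (verit))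

lemma swp_swp: "x1 \<noteq> x2 \<Longrightarrow> swp (swp p x1 x2) x1 x2 = p"
  by (rule ext) (simp add: swp_def)

lemma orbit_sub_from_next:
  assumes "perm_on p A" "a \<in> A" "p a \<in> Z" "\<forall>z\<in>Z. q z \<in> Z"
    "\<forall>w\<in>ld_orbit p a. w \<noteq> a \<longrightarrow> q w = p w"
  shows "ld_orbit p a \<subseteq> Z"
proof -
  have suc: "(p ^^ Suc j) a \<in> Z" for j
  proof (induction j)
    case 0 then show ?case using assms(3) by simp
  next
    case (Suc j)
    let ?w = "(p ^^ Suc j) a"
    show ?case
    proof (cases "?w = a")
      case True
      have "(p ^^ Suc (Suc j)) a = p ?w" by simp
      then show ?thesis using assms(3) True by simp
    next
      case False
      have "?w \<in> ld_orbit p a" by (rule funpow_in_ld_orbit)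
      then have "q ?w = p ?w" using assms(5) False by blast
      moreover have "(p ^^ Suc (Suc j)) a = p ?w" by simp
      moreover have "q ?w \<in> Z" using Suc assms(4) by blast
      ultimately show ?thesis by simp
    qed
  qed
  obtain N where N: "N > 0" "(p ^^ N) a = a" using po_period[OF assms(1,2)] by blast
  have "(p ^^ n) a \<in> Z" for n
  proof (cases n)
    case 0
    have "Suc (N - 1) = N" using N by simp
    then have "(p ^^ N) a \<in> Z" using suc[of "N - 1"] by metis
    then show ?thesis using 0 N by simp
  next
    case (Suc j) then show ?thesis using suc by simp
  qed
  then show ?thesis unfolding ld_orbit_def by auto
qed

lemma swp_merge:
  assumes p: "perm_on p A" and x1: "x1 \<in> A" and x2: "x2 \<in> A" and nx: "x2 \<notin> ld_orbit p x1"
  shows "card (ld_orbit (swp p x1 x2) ` A) + 1 = card (ld_orbit p ` A)"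
proof -
  define q where "q = swp p x1 x2"
  define O1 where "O1 = ld_orbit p x1"
  define O2 where "O2 = ld_orbit p x2"
  have ne: "x1 \<noteq> x2" using nx orbit_self by metis
  have q: "perm_on q A" unfolding q_def using swp_perm[OF p x1 x2 ne] .
  have fin: "finite A" using p perm_on_def by blast
  have x1O2: "x1 \<notin> O2" unfolding O2_def using orbit_back[OF p x2] nx by blast
  have O12: "O1 \<noteq> O2" using x1O2 orbit_self unfolding O1_def by metis
  have O1A: "O1 \<subseteq> A" "O2 \<subseteq> A" unfolding O1_def O2_def using ld_orbit_sub[OF p] x1 x2 by auto
  define Z where "Z = ld_orbit q x1"
  have Zcl: "\<forall>z\<in>Z. q z \<in> Z"
    unfolding Z_def using orbit_mono p_in_orbit by fast
  have qx: "q x1 = p x2" "q x2 = p x1" "\<And>z. z \<noteq> x1 \<Longrightarrow> z \<noteq> x2 \<Longrightarrow> q z = p z"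
    unfolding q_def swp_def using ne by auto
  have O2Z: "O2 \<subseteq> Z" unfolding O2_def
  proof (rule orbit_sub_from_next[OF p x2])
    show "p x2 \<in> Z" unfolding Z_def using qx(1) p_in_orbit by metis
    show "\<forall>z\<in>Z. q z \<in> Z" by (rule Zcl)
    show "\<forall>w\<in>ld_orbit p x2. w \<noteq> x2 \<longrightarrow> q w = p w"
    proof (intro ballI impI)
      fix w assume w: "w \<in> ld_orbit p x2" "w \<noteq> x2"
      then have "w \<noteq> x1" using x1O2 unfolding O2_def by blast
      then show "q w = p w" using qx(3) w(2) by blast
    qed
  qed
  have O1Z: "O1 \<subseteq> Z" unfolding O1_def
  proof (rule orbit_sub_from_next[OF p x1])
    have "x2 \<in> O2" unfolding O2_def by (rule orbit_self)
    then have "x2 \<in> Z" using O2Z by (rule subsetD[rotated])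
    then show "p x1 \<in> Z" using qx(2) Zcl by metis
    show "\<forall>z\<in>Z. q z \<in> Z" by (rule Zcl)
    show "\<forall>w\<in>ld_orbit p x1. w \<noteq> x1 \<longrightarrow> q w = p w"
    proof (intro ballI impI)
      fix w assume w: "w \<in> ld_orbit p x1" "w \<noteq> x1"
      then have "w \<noteq> x2" using nx by blast
      then show "q w = p w" using qx(3) w(2) by blast
    qed
  qed
  have ZO: "Z \<subseteq> O1 \<union> O2" unfolding Z_def
  proof (rule orbit_closed_sub)
    show "x1 \<in> O1 \<union> O2" unfolding O1_def by simp
    show "\<forall>z\<in>O1 \<union> O2. q z \<in> O1 \<union> O2"
    proof
      fix z assume z: "z \<in> O1 \<union> O2"
      show "q z \<in> O1 \<union> O2"
      proof (cases "z = x1 \<or> z = x2")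
        case True then show ?thesis using qx(1,2) unfolding O1_def O2_def by auto
      next
        case False
        then have "q z = p z" using qx(3) by blast
        moreover have "p z \<in> O1 \<union> O2"
          using z orbit_mono[where y=z and p=p and x=x1] orbit_mono[where y=z and p=p and x=x2] p_in_orbit[where x=z and p=p]
          unfolding O1_def O2_def by blast
        ultimately show ?thesis by simp
      qed
    qed
  qed
  have Zeq: "Z = O1 \<union> O2" using ZO O1Z O2Z by blast
  have inZ: "ld_orbit q y = Z" if "y \<in> O1 \<union> O2" for y
    using orbit_eq[OF q x1] that Zeq unfolding Z_def by blast
  have outside: "ld_orbit q y = ld_orbit p y" if y: "y \<in> A - (O1 \<union> O2)" for y
  proof -
    have "\<forall>z\<in>ld_orbit p y. q z = p z"
    proof
      fix z assume z: "z \<in> ld_orbit p y"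
      have yA: "y \<in> A" using y by blast
      have "z \<noteq> x1"
      proof
        assume "z = x1"
        then have "O1 = ld_orbit p y" unfolding O1_def using orbit_eq[OF p yA] z by blast
        then show False using y orbit_self[where x=y and p=p] by blast
      qed
      moreover have "z \<noteq> x2"
      proof
        assume "z = x2"
        then have "O2 = ld_orbit p y" unfolding O2_def using orbit_eq[OF p yA] z by blast
        then show False using y orbit_self[where x=y and p=p] by blast
      qed
      ultimately show "q z = p z" using qx(3) by blast
    qed
    then show ?thesis using orbit_cong_agree by metis
  qed
  define M where "M = ld_orbit p ` (A - (O1 \<union> O2))"
  have Mfin: "finite M" unfolding M_def using fin by simp
  have notM: "O1 \<notin> M" "O2 \<notin> M" "Z \<notin> M"
  proof -
    have *: "X \<notin> M" if "X \<subseteq> O1 \<union> O2" for X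
    proof
      assume "X \<in> M"
      then obtain y where y: "y \<in> A - (O1 \<union> O2)" "X = ld_orbit p y" unfolding M_def by blast
      then show False using that orbit_self[where x=y and p=p] by blast
    qed
    show "O1 \<notin> M" "O2 \<notin> M" "Z \<notin> M" using * Zeq by auto
  qed
  have Aq: "ld_orbit q ` A = insert Z M"
  proof
    show "ld_orbit q ` A \<subseteq> insert Z M" using inZ outside unfolding M_def by blast
    show "insert Z M \<subseteq> ld_orbit q ` A"
    proof
      fix X assume "X \<in> insert Z M"
      then show "X \<in> ld_orbit q ` A"
      proof
        assume "X = Z" then show ?thesis using x1 unfolding Z_def by blast
      next
        assume "X \<in> M"
        then obtain y where "y \<in> A - (O1 \<union> O2)" "X = ld_orbit p y" unfolding M_def by blast
        then show ?thesis using outside by blast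
      qed
    qed
  qed
  have Ap: "ld_orbit p ` A = insert O1 (insert O2 M)"
  proof
    show "ld_orbit p ` A \<subseteq> insert O1 (insert O2 M)"
    proof
      fix X assume "X \<in> ld_orbit p ` A"
      then obtain y where y: "y \<in> A" "X = ld_orbit p y" by blast
      show "X \<in> insert O1 (insert O2 M)"
      proof (cases "y \<in> O1 \<union> O2")
        case True
        then show ?thesis using y orbit_eq[OF p x1] orbit_eq[OF p x2] unfolding O1_def O2_def by blast
      next
        case False then show ?thesis using y unfolding M_def by blast
      qed
    qed
    show "insert O1 (insert O2 M) \<subseteq> ld_orbit p ` A" using x1 x2 unfolding O1_def O2_def M_def by auto
  qed
  show ?thesis unfolding q_def[symmetric] Aq Ap using notM Mfin O12 by simp
qed

lemma swp_split:
  assumes p: "perm_on p A" and x1: "x1 \<in> A" and x2: "x2 \<in> A" and ne: "x1 \<noteq> x2"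
    and yx: "x2 \<in> ld_orbit p x1"
  shows "card (ld_orbit (swp p x1 x2) ` A) = card (ld_orbit p ` A) + 1"
proof -
  define q where "q = swp p x1 x2"
  have q: "perm_on q A" unfolding q_def using swp_perm[OF p x1 x2 ne] .
  have "x1 \<in> ld_orbit p x2" using orbit_back[OF p x1 yx] .
  then have ex: "\<exists>m. (p ^^ m) x2 = x1" unfolding ld_orbit_def by blast
  define m where "m = (LEAST m. (p ^^ m) x2 = x1)"
  have pm: "(p ^^ m) x2 = x1" unfolding m_def using LeastI_ex[OF ex] .
  have m0: "m \<noteq> 0"
  proof
    assume "m = 0" then show False using pm ne by simp
  qed
  have lt: "(p ^^ j) x2 \<noteq> x1" if "j < m" for j using not_less_Least[of j] that unfolding m_def by blast
  define S where "S = (\<lambda>j. (p ^^ j) x2) ` {1..m}"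
  have x2S: "x2 \<notin> S"
  proof
    assume "x2 \<in> S"
    then obtain j where j: "j \<in> {1..m}" "(p ^^ j) x2 = x2" unfolding S_def by (rule imageE) simp
    show False
    proof (cases "j = m")
      case True then show ?thesis using j pm ne by simp
    next
      case False
      have jm: "j \<le> m" "1 \<le> j" using j(1) by auto
      have "(p ^^ (m - j)) ((p ^^ j) x2) = (p ^^ (m - j + j)) x2" by (simp add: funpow_add)
      also have "m - j + j = m" using jm by simp
      finally have "(p ^^ (m - j)) x2 = x1" using j(2) pm by simp
      moreover have "m - j < m" using jm by simp
      ultimately show ?thesis using lt by blast
    qed
  qed
  have qx: "q x1 = p x2" "\<And>z. z \<noteq> x1 \<Longrightarrow> z \<noteq> x2 \<Longrightarrow> q z = p z"
    unfolding q_def swp_def using ne by auto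
  have "ld_orbit q x1 \<subseteq> S"
  proof (rule orbit_closed_sub)
    have "m \<in> {1..m}" using m0 by simp
    then show "x1 \<in> S" unfolding S_def using pm by (metis image_eqI)
    show "\<forall>z\<in>S. q z \<in> S"
    proof
      fix z assume zS: "z \<in> S"
      then obtain j where j: "j \<in> {1..m}" "z = (p ^^ j) x2" unfolding S_def by (rule imageE) simp
      show "q z \<in> S"
      proof (cases "z = x1")
        case True
        have "1 \<in> {1..m}" using m0 by simp
        then have "(p ^^ 1) x2 \<in> S" unfolding S_def by (rule imageI)
        then show ?thesis using qx(1) True by simp
      next
        case False
        have "z \<noteq> x2" using x2S zS by blast
        then have qz: "q z = (p ^^ Suc j) x2" using qx(2) False j(2) by simp
        have "j \<noteq> m" using False j pm by auto
        then have "Suc j \<in> {1..m}" using j(1) by auto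
        then have "(p ^^ Suc j) x2 \<in> S" unfolding S_def by (rule imageI)
        then show ?thesis using qz by simp
      qed
    qed
  qed
  then have "x2 \<notin> ld_orbit q x1" using x2S by blast
  from swp_merge[OF q x1 x2 this] show ?thesis unfolding q_def swp_swp[OF ne] by simp
qed

definition fret :: "('a \<Rightarrow> 'a) \<Rightarrow> 'a set \<Rightarrow> 'a \<Rightarrow> 'a" where
  "fret p R d = (p ^^ (LEAST k. 0 < k \<and> (p ^^ k) d \<in> R)) d"

lemma fret_basic:
  assumes p: "perm_on p A" and R: "R \<subseteq> A" and d: "d \<in> R"
  shows "fret p R d \<in> R" "fret p R d \<in> ld_orbit p d"
    "\<And>k. 0 < k \<Longrightarrow> k < (LEAST k. 0 < k \<and> (p ^^ k) d \<in> R) \<Longrightarrow> (p ^^ k) d \<notin> R"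
    "0 < (LEAST k. 0 < k \<and> (p ^^ k) d \<in> R)"
proof -
  obtain N where N: "N > 0" "(p ^^ N) d = d" using po_period[OF p] R d by blast
  have ex: "\<exists>k. 0 < k \<and> (p ^^ k) d \<in> R" using N d by auto
  show "fret p R d \<in> R" "0 < (LEAST k. 0 < k \<and> (p ^^ k) d \<in> R)"
    unfolding fret_def using LeastI_ex[OF ex] by auto
  show "fret p R d \<in> ld_orbit p d" unfolding fret_def by (rule funpow_in_ld_orbit)
  show "\<And>k. 0 < k \<Longrightarrow> k < (LEAST k. 0 < k \<and> (p ^^ k) d \<in> R) \<Longrightarrow> (p ^^ k) d \<notin> R"
    using not_less_Least by blast
qed

lemma fret_orbit:
  assumes p: "perm_on p A" and R: "R \<subseteq> A" and d: "d \<in> R"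
  shows "ld_orbit (fret p R) d = ld_orbit p d \<inter> R"
proof
  have "(fret p R ^^ n) d \<in> ld_orbit p d \<inter> R" for n
  proof (induction n)
    case 0 then show ?case using d orbit_self by simp
  next
    case (Suc n)
    let ?y = "(fret p R ^^ n) d"
    have yR: "?y \<in> R" "?y \<in> ld_orbit p d" using Suc by auto
    have a: "fret p R ?y \<in> R" "fret p R ?y \<in> ld_orbit p ?y" using fret_basic[OF p R yR(1)] by auto
    have "ld_orbit p ?y \<subseteq> ld_orbit p d" using orbit_mono[OF yR(2)] .
    then show ?case using a by auto
  qed
  then show "ld_orbit (fret p R) d \<subseteq> ld_orbit p d \<inter> R" unfolding ld_orbit_def by auto
next
  have "\<forall>d\<in>R. (p ^^ m) d \<in> R \<longrightarrow> (\<exists>n. (fret p R ^^ n) d = (p ^^ m) d)" for m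
  proof (induction m rule: less_induct)
    case (less m)
    show ?case
    proof (intro ballI impI)
      fix d assume d: "d \<in> R" and pm: "(p ^^ m) d \<in> R"
      show "\<exists>n. (fret p R ^^ n) d = (p ^^ m) d"
      proof (cases "m = 0")
        case True then show ?thesis by (intro exI[of _ 0]) simp
      next
        case False
        define k where "k = (LEAST k. 0 < k \<and> (p ^^ k) d \<in> R)"
        have k0: "0 < k" using fret_basic(4)[OF p R d] k_def by simp
        have km: "k \<le> m" using fret_basic(3)[OF p R d] False pm k_def by (meson not_le not_gr0)
        have fr: "fret p R d = (p ^^ k) d" unfolding fret_def k_def ..
        show ?thesis
        proof (cases "k = m")
          case True then show ?thesis using fr by (intro exI[of _ 1]) simp
        next
          case False
          have "(p ^^ m) d = (p ^^ (m - k)) (fret p R d)"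
            using fr km by (metis funpow_add comp_apply le_add_diff_inverse2)
          moreover have "m - k < m" using k0 km by simp
          moreover have "fret p R d \<in> R" using fret_basic(1)[OF p R d] .
          ultimately obtain n where "(fret p R ^^ n) (fret p R d) = (p ^^ m) d"
            using less pm by metis
          then show ?thesis by (metis funpow_Suc_right comp_apply)
        qed
      qed
    qed
  qed
  note H = this
  show "ld_orbit p d \<inter> R \<subseteq> ld_orbit (fret p R) d"
  proof
    fix z assume "z \<in> ld_orbit p d \<inter> R"
    then obtain m where m: "z = (p ^^ m) d" "z \<in> R" unfolding ld_orbit_def by blast
    then obtain n where "(fret p R ^^ n) d = z" using H[of m] d by blast
    then show "z \<in> ld_orbit (fret p R) d" by (metis funpow_in_ld_orbit)
  qed
qed

lemma fret_count:
  assumes p: "perm_on p A" and R: "R \<subseteq> A"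
  shows "card (ld_orbit (fret p R) ` R) = card {Y \<in> ld_orbit p ` A. Y \<inter> R \<noteq> {}}"
proof -
  have eq: "ld_orbit (fret p R) ` R = (\<lambda>Y. Y \<inter> R) ` {Y \<in> ld_orbit p ` A. Y \<inter> R \<noteq> {}}"
  proof
    show "ld_orbit (fret p R) ` R \<subseteq> (\<lambda>Y. Y \<inter> R) ` {Y \<in> ld_orbit p ` A. Y \<inter> R \<noteq> {}}"
    proof
      fix X assume "X \<in> ld_orbit (fret p R) ` R"
      then obtain d where d: "d \<in> R" "X = ld_orbit (fret p R) d" by blast
      have "X = ld_orbit p d \<inter> R" using fret_orbit[OF p R d(1)] d(2) by simp
      moreover have "ld_orbit p d \<in> ld_orbit p ` A" using d(1) R by blast
      moreover have "d \<in> ld_orbit p d \<inter> R" using d(1) by simp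
      ultimately show "X \<in> (\<lambda>Y. Y \<inter> R) ` {Y \<in> ld_orbit p ` A. Y \<inter> R \<noteq> {}}" by blast
    qed
    show "(\<lambda>Y. Y \<inter> R) ` {Y \<in> ld_orbit p ` A. Y \<inter> R \<noteq> {}} \<subseteq> ld_orbit (fret p R) ` R"
    proof
      fix X assume "X \<in> (\<lambda>Y. Y \<inter> R) ` {Y \<in> ld_orbit p ` A. Y \<inter> R \<noteq> {}}"
      then obtain x z where xz: "x \<in> A" "X = ld_orbit p x \<inter> R" "z \<in> ld_orbit p x" "z \<in> R" by blast
      have "ld_orbit p z = ld_orbit p x" using orbit_eq[OF p xz(1,3)] .
      then have "X = ld_orbit (fret p R) z" using fret_orbit[OF p R xz(4)] xz by simp
      then show "X \<in> ld_orbit (fret p R) ` R" using xz by blast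
    qed
  qed
  have inj: "inj_on (\<lambda>Y. Y \<inter> R) {Y \<in> ld_orbit p ` A. Y \<inter> R \<noteq> {}}"
  proof (rule inj_onI)
    fix O1 O2 assume O1: "O1 \<in> {Y \<in> ld_orbit p ` A. Y \<inter> R \<noteq> {}}"
      and O2: "O2 \<in> {Y \<in> ld_orbit p ` A. Y \<inter> R \<noteq> {}}" and eq: "O1 \<inter> R = O2 \<inter> R"
    then obtain x y where "x \<in> A" "y \<in> A" "O1 = ld_orbit p x" "O2 = ld_orbit p y" by blast
    moreover have "O1 \<inter> O2 \<noteq> {}" using O1 eq by blast
    ultimately show "O1 = O2" using orbits_disj[OF p] by blast
  qed
  show ?thesis unfolding eq using card_image[OF inj] .
qed







definition comps :: "'b set \<Rightarrow> ('b \<times> 'b) set \<Rightarrow> 'b set set" where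
  "comps X E = (\<lambda>x. (E\<^sup>*) `` {x}) ` X"

lemma comps_empty: "card (comps X {}) = card X"
proof -
  have "comps X {} = (\<lambda>x. {x}) ` X" unfolding comps_def by simp
  moreover have "inj_on (\<lambda>x. {x}) X" by (rule inj_onI) simp
  ultimately show ?thesis by (simp add: card_image)
qed

lemma sym_rtr: "sym E \<Longrightarrow> (x, y) \<in> E\<^sup>* \<Longrightarrow> (y, x) \<in> E\<^sup>*"
  by (meson sym_rtrancl symD)

lemma comps_same:
  assumes "sym E" "(u, v) \<in> E\<^sup>*"
  shows "(E \<union> {u, v} \<times> {u, v})\<^sup>* = E\<^sup>*"
proof (rule rtrancl_subset)
  show "E \<subseteq> E \<union> {u, v} \<times> {u, v}" by blast
  have "(v, u) \<in> E\<^sup>*" using sym_rtr[OF assms] .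
  then show "E \<union> {u, v} \<times> {u, v} \<subseteq> E\<^sup>*" using assms(2) by auto
qed

lemma merge_rtr:
  assumes s: "sym E"
  shows "(x, y) \<in> (E \<union> {u, v} \<times> {u, v})\<^sup>* \<longleftrightarrow>
    (x, y) \<in> E\<^sup>* \<or> ((x, u) \<in> E\<^sup>* \<and> (v, y) \<in> E\<^sup>*) \<or> ((x, v) \<in> E\<^sup>* \<and> (u, y) \<in> E\<^sup>*)"
    (is "?L \<longleftrightarrow> ?R x y")
proof
  let ?E' = "E \<union> {u, v} \<times> {u, v}"
  have sub: "E\<^sup>* \<subseteq> ?E'\<^sup>*" by (rule rtrancl_mono) blast
  show "?R x y \<Longrightarrow> ?L"
  proof -
    assume r: "?R x y"
    have uv: "(u, v) \<in> ?E'\<^sup>*" "(v, u) \<in> ?E'\<^sup>*" by auto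
    show ?L using r
    proof (elim disjE conjE)
      assume "(x, y) \<in> E\<^sup>*" then show ?L using sub by blast
    next
      assume "(x, u) \<in> E\<^sup>*" "(v, y) \<in> E\<^sup>*"
      then show ?L using sub uv(1) by (meson rtrancl_trans subsetD)
    next
      assume "(x, v) \<in> E\<^sup>*" "(u, y) \<in> E\<^sup>*"
      then show ?L using sub uv(2) by (meson rtrancl_trans subsetD)
    qed
  qed
  show "?L \<Longrightarrow> ?R x y"
  proof (induction rule: rtrancl_induct)
    case base then show ?case by simp
  next
    case (step y z)
    show ?case
    proof (cases "(y, z) \<in> E")
      case True
      then show ?thesis using step.IH by (meson rtrancl.rtrancl_into_rtrancl)
    next
      case False
      then have yz: "y \<in> {u, v}" "z \<in> {u, v}" using step.hyps(2) by auto
      have vu: "(u, v) \<in> E\<^sup>* \<Longrightarrow> (v, u) \<in> E\<^sup>*" using sym_rtr[OF s] by blast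
      have refl: "(u, u) \<in> E\<^sup>*" "(v, v) \<in> E\<^sup>*" by auto
      from step.IH show ?thesis
      proof (elim disjE conjE)
        assume a: "(x, y) \<in> E\<^sup>*"
        show ?thesis using yz a refl by auto
      next
        assume a: "(x, u) \<in> E\<^sup>*" "(v, y) \<in> E\<^sup>*"
        show ?thesis using yz a refl sym_rtr[OF s a(2)] by (auto intro: rtrancl_trans)
      next
        assume a: "(x, v) \<in> E\<^sup>*" "(u, y) \<in> E\<^sup>*"
        show ?thesis using yz a refl sym_rtr[OF s a(2)] by (auto intro: rtrancl_trans)
      qed
    qed
  qed
qed

lemma comps_merge:
  assumes fin: "finite X" and s: "sym E" and u: "u \<in> X" and v: "v \<in> X" and nc: "(u, v) \<notin> E\<^sup>*"
  shows "card (comps X (E \<union> {u, v} \<times> {u, v})) + 1 = card (comps X E)"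
proof -
  let ?E' = "E \<union> {u, v} \<times> {u, v}"
  define C where "C x = E\<^sup>* `` {x}" for x
  define Xo where "Xo = {x \<in> X. (x, u) \<notin> E\<^sup>* \<and> (x, v) \<notin> E\<^sup>*}"
  define M where "M = C ` Xo"
  have symr: "\<And>a b. (a, b) \<in> E\<^sup>* \<Longrightarrow> (b, a) \<in> E\<^sup>*" using sym_rtr[OF s] by blast
  have cls: "C a = C b" if "(a, b) \<in> E\<^sup>*" for a b
    unfolding C_def using that symr by (auto intro: rtrancl_trans)
  have new: "?E'\<^sup>* `` {x} = (if (x, u) \<in> E\<^sup>* \<or> (x, v) \<in> E\<^sup>* then C u \<union> C v else C x)" for x
  proof -
    have "?E'\<^sup>* `` {x} = {y. (x, y) \<in> E\<^sup>* \<or> ((x, u) \<in> E\<^sup>* \<and> (v, y) \<in> E\<^sup>*) \<or> ((x, v) \<in> E\<^sup>* \<and> (u, y) \<in> E\<^sup>*)}"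
      using merge_rtr[OF s] by blast
    also have "\<dots> = (if (x, u) \<in> E\<^sup>* \<or> (x, v) \<in> E\<^sup>* then C u \<union> C v else C x)"
    proof (cases "(x, u) \<in> E\<^sup>*")
      case True
      then have "(x, v) \<notin> E\<^sup>*" using nc symr by (meson rtrancl_trans)
      moreover have "C x = C u" using cls True by blast
      ultimately show ?thesis using True unfolding C_def by auto
    next
      case F1: False
      show ?thesis
      proof (cases "(x, v) \<in> E\<^sup>*")
        case True
        moreover have "C x = C v" using cls True by blast
        ultimately show ?thesis using F1 unfolding C_def by auto
      next
        case False
        then show ?thesis using F1 unfolding C_def by auto
      qed
    qed
    finally show ?thesis .
  qed
  have uC: "u \<in> C u" "v \<in> C v" unfolding C_def by auto
  have Cuv: "C u \<noteq> C v" using uC nc unfolding C_def by blast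
  have notM: "C u \<notin> M" "C v \<notin> M" "C u \<union> C v \<notin> M"
  proof -
    have *: "\<not> (u \<in> C x \<or> v \<in> C x)" if "x \<in> Xo" for x
      using that unfolding Xo_def C_def using symr by blast
    show "C u \<notin> M" "C v \<notin> M" "C u \<union> C v \<notin> M" unfolding M_def using * uC by blast+
  qed
  have Mfin: "finite M" unfolding M_def Xo_def using fin by simp
  have c1: "comps X ?E' = insert (C u \<union> C v) M"
  proof
    show "comps X ?E' \<subseteq> insert (C u \<union> C v) M"
      unfolding comps_def M_def Xo_def using new by auto
    show "insert (C u \<union> C v) M \<subseteq> comps X ?E'"
    proof
      fix Y assume "Y \<in> insert (C u \<union> C v) M"
      then show "Y \<in> comps X ?E'"
      proof
        assume "Y = C u \<union> C v"
        then have "Y = ?E'\<^sup>* `` {u}" using new[of u] by simp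
        then show ?thesis unfolding comps_def using u by blast
      next
        assume "Y \<in> M"
        then obtain x where "x \<in> Xo" "Y = C x" unfolding M_def by blast
        then have "Y = ?E'\<^sup>* `` {x}" "x \<in> X" using new[of x] unfolding Xo_def by auto
        then show ?thesis unfolding comps_def by blast
      qed
    qed
  qed
  have c2: "comps X E = insert (C u) (insert (C v) M)"
  proof
    show "comps X E \<subseteq> insert (C u) (insert (C v) M)"
    proof
      fix Y assume "Y \<in> comps X E"
      then obtain x where x: "x \<in> X" "Y = C x" unfolding comps_def C_def by blast
      show "Y \<in> insert (C u) (insert (C v) M)"
      proof (cases "(x, u) \<in> E\<^sup>* \<or> (x, v) \<in> E\<^sup>*")
        case True then show ?thesis using cls x by blast
      next
        case False then show ?thesis using x unfolding M_def Xo_def by blast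
      qed
    qed
    show "insert (C u) (insert (C v) M) \<subseteq> comps X E"
      unfolding comps_def M_def Xo_def C_def using u v by blast
  qed
  show ?thesis unfolding c1 c2 using notM Mfin Cuv by simp
qed

lemma comps_one_iff:
  assumes s: "sym E" and ne: "X \<noteq> {}"
  shows "card (comps X E) = 1 \<longleftrightarrow> (\<forall>x\<in>X. \<forall>y\<in>X. (x, y) \<in> E\<^sup>*)"
proof
  assume c: "card (comps X E) = 1"
  show "\<forall>x\<in>X. \<forall>y\<in>X. (x, y) \<in> E\<^sup>*"
  proof (intro ballI)
    fix x y assume x: "x \<in> X" and y: "y \<in> X"
    obtain Z where "comps X E = {Z}" using c card_1_singletonE by blast
    moreover have "E\<^sup>* `` {x} \<in> comps X E" "E\<^sup>* `` {y} \<in> comps X E"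
      unfolding comps_def using x y by auto
    ultimately have "E\<^sup>* `` {x} = E\<^sup>* `` {y}" by simp
    then have "y \<in> E\<^sup>* `` {x}" by simp
    then show "(x, y) \<in> E\<^sup>*" by simp
  qed
next
  assume a: "\<forall>x\<in>X. \<forall>y\<in>X. (x, y) \<in> E\<^sup>*"
  obtain x0 where x0: "x0 \<in> X" using ne by blast
  have "E\<^sup>* `` {x} = E\<^sup>* `` {x0}" if "x \<in> X" for x
  proof -
    have "(x, x0) \<in> E\<^sup>*" "(x0, x) \<in> E\<^sup>*" using a that x0 by auto
    then show ?thesis by (auto intro: rtrancl_trans)
  qed
  then have "comps X E = {E\<^sup>* `` {x0}}" unfolding comps_def using x0 by blast
  then show "card (comps X E) = 1" by simp
qed

lemma comps_ge1: "finite X \<Longrightarrow> X \<noteq> {} \<Longrightarrow> card (comps X E) \<ge> 1"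
  unfolding comps_def by (simp add: Suc_leI card_gt_0_iff)







locale LD =
  fixes H :: "'d set" and sg al :: "'d \<Rightarrow> 'd" and ov sh :: "'d \<Rightarrow> bool"
  assumes ld: "link_diagram H sg al ov" and cb: "checkerboard H sg al sh"
begin

lemma ldc: "finite H" "H \<noteq> {}" "bij_betw sg H H" "bij_betw al H H"
  "\<forall>d\<in>H. al (al d) = d \<and> al d \<noteq> d \<and>
             (sg ^^ 4) d = d \<and> sg d \<noteq> d \<and> (sg ^^ 2) d \<noteq> d \<and>
             (ov (sg d) \<longleftrightarrow> \<not> ov d)"
  "\<forall>d\<in>H. \<forall>e\<in>H. (d, e) \<in> (ld_gen H sg al)\<^sup>*"
  "int (ld_norbits sg H) - int (card H div 2) + int (ld_norbits (al \<circ> sg) H) = 2"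
proof -
  note L = ld[unfolded link_diagram_def]
  show "finite H" using L by (rule conjunct1)
  show "H \<noteq> {}" using L by (blast dest: conjunct2 conjunct1)
  show "bij_betw sg H H" using L[THEN conjunct2, THEN conjunct2] by (rule conjunct1)
  show "bij_betw al H H" using L[THEN conjunct2, THEN conjunct2, THEN conjunct2] by (rule conjunct1)
  show "\<forall>d\<in>H. al (al d) = d \<and> al d \<noteq> d \<and>
             (sg ^^ 4) d = d \<and> sg d \<noteq> d \<and> (sg ^^ 2) d \<noteq> d \<and>
             (ov (sg d) \<longleftrightarrow> \<not> ov d)"
    using L[THEN conjunct2, THEN conjunct2, THEN conjunct2, THEN conjunct2] by (rule conjunct1)
  show "\<forall>d\<in>H. \<forall>e\<in>H. (d, e) \<in> (ld_gen H sg al)\<^sup>*"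
    using L[THEN conjunct2, THEN conjunct2, THEN conjunct2, THEN conjunct2, THEN conjunct2] by (rule conjunct1)
  show "int (ld_norbits sg H) - int (card H div 2) + int (ld_norbits (al \<circ> sg) H) = 2"
    using L[THEN conjunct2, THEN conjunct2, THEN conjunct2, THEN conjunct2, THEN conjunct2] by (rule conjunct2)
qed

lemma finH: "finite H" by (rule ldc(1))
lemma Hne: "H \<noteq> {}" by (rule ldc(2))

lemma sg_in [simp]: "d \<in> H \<Longrightarrow> sg d \<in> H"
  using ldc(3) unfolding bij_betw_def by blast
lemma al_in [simp]: "d \<in> H \<Longrightarrow> al d \<in> H"
  using ldc(4) unfolding bij_betw_def by blast
lemma al_al [simp]: "d \<in> H \<Longrightarrow> al (al d) = d"
  using ldc(5) by blast
lemma al_ne: "d \<in> H \<Longrightarrow> al d \<noteq> d"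
  using ldc(5) by blast
lemma sg_inj: "inj_on sg H"
  using ldc(3) unfolding bij_betw_def by blast

lemma f2: "(f ^^ 2) x = f (f x)" by (simp add: eval_nat_numeral)
lemma f3: "(f ^^ 3) x = f (f (f x))" by (simp add: eval_nat_numeral)
lemma f4: "(f ^^ 4) x = f (f (f (f x)))" by (simp add: eval_nat_numeral)

lemma sg4 [simp]: "d \<in> H \<Longrightarrow> sg (sg (sg (sg d))) = d"
  using ldc(5) unfolding f4 by blast
lemma sg_ne: "d \<in> H \<Longrightarrow> sg d \<noteq> d"
  using ldc(5) by blast
lemma sg2_ne: "d \<in> H \<Longrightarrow> sg (sg d) \<noteq> d"
  using ldc(5) unfolding f2 by blast
lemma ov_sg [simp]: "d \<in> H \<Longrightarrow> ov (sg d) \<longleftrightarrow> \<not> ov d"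
  using ldc(5) by blast
lemma sh_sg [simp]: "d \<in> H \<Longrightarrow> sh (sg d) \<longleftrightarrow> \<not> sh d"
  using cb unfolding checkerboard_def by blast
lemma sh_alsg: "d \<in> H \<Longrightarrow> sh (al (sg d)) = sh d"
  using cb unfolding checkerboard_def by blast
lemma sh_al [simp]: "d \<in> H \<Longrightarrow> sh (al d) \<longleftrightarrow> \<not> sh d"
proof -
  assume d: "d \<in> H"
  let ?e = "sg (sg (sg d))"
  have "al d = al (sg ?e)" using d by simp
  then have "sh (al d) = sh ?e" using sh_alsg[of ?e] d by simp
  then show ?thesis using d by simp
qed

lemma sg3_ne: "d \<in> H \<Longrightarrow> sg (sg (sg d)) \<noteq> d"
  by (metis sg4 sg_ne sg_in)

lemma perm_sg: "perm_on sg H" unfolding perm_on_def using finH sg_inj by simp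
lemma al_inj: "inj_on al H" by (metis al_al inj_onI)
lemma perm_al: "perm_on al H" unfolding perm_on_def using finH al_inj by simp
lemma perm_fs: "perm_on (al \<circ> sg) H"
proof -
  have "inj_on al (sg ` H)" using al_inj by (rule inj_on_subset) auto
  then have "inj_on (al \<circ> sg) H" using sg_inj by (rule comp_inj_on[rotated])
  then show ?thesis unfolding perm_on_def using finH by simp
qed

definition cr :: "'d \<Rightarrow> 'd set" where "cr d = ld_orbit sg d"

lemma cr_eq: "d \<in> H \<Longrightarrow> cr d = {d, sg d, sg (sg d), sg (sg (sg d))}"
proof -
  assume d: "d \<in> H"
  have "(sg ^^ n) d \<in> {d, sg d, sg (sg d), sg (sg (sg d))}" for n
  proof (induction n)
    case 0 then show ?case by simp
  next
    case (Suc n) then show ?case using d by auto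
  qed
  moreover have "{d, sg d, sg (sg d), sg (sg (sg d))} \<subseteq> cr d"
    unfolding cr_def ld_orbit_def
    by (auto intro: exI[of _ 0] exI[of _ 1] exI[of _ 2] exI[of _ 3] simp: f2 f3)
  ultimately show ?thesis unfolding cr_def ld_orbit_def by blast
qed

lemma cr_sg [simp]: "d \<in> H \<Longrightarrow> cr (sg d) = cr d"
  unfolding cr_def using orbit_step_eq[OF perm_sg] by blast

lemma cr_mem: "d \<in> H \<Longrightarrow> e \<in> cr d \<Longrightarrow> cr e = cr d"
  unfolding cr_def using orbit_eq[OF perm_sg] by blast

lemma cr_sub: "d \<in> H \<Longrightarrow> cr d \<subseteq> H" unfolding cr_def using ld_orbit_sub[OF perm_sg] by blast

lemma crossings_eq: "crossings H sg = cr ` H" unfolding crossings_def cr_def by simp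

lemma card_cr: "d \<in> H \<Longrightarrow> card (cr d) = 4"
proof -
  assume d: "d \<in> H"
  have n: "d \<noteq> sg d" "d \<noteq> sg (sg d)" "d \<noteq> sg (sg (sg d))"
    "sg d \<noteq> sg (sg d)" "sg d \<noteq> sg (sg (sg d))" "sg (sg d) \<noteq> sg (sg (sg d))"
    using sg_ne[of d] sg2_ne[of d] sg3_ne[of d] sg_ne[of "sg d"] sg2_ne[of "sg d"] sg_ne[of "sg (sg d)"] d
    by auto
  show ?thesis unfolding cr_eq[OF d] using n by simp
qed

lemma card_H: "card H = 4 * card (crossings H sg)"
proof -
  have U: "\<Union>(cr ` H) = H"
  proof
    show "\<Union>(cr ` H) \<subseteq> H" using cr_sub by blast
    show "H \<subseteq> \<Union>(cr ` H)"
    proof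
      fix x assume x: "x \<in> H"
      have "x \<in> cr x" unfolding cr_def by simp
      then show "x \<in> \<Union>(cr ` H)" using x by blast
    qed
  qed
  have "4 * card (cr ` H) = card (\<Union>(cr ` H))"
  proof (rule card_partition)
    show "finite (cr ` H)" using finH by simp
    show "finite (\<Union>(cr ` H))" using U finH by simp
    show "\<And>c. c \<in> cr ` H \<Longrightarrow> card c = 4" using card_cr by blast
    show "\<And>c1 c2. c1 \<in> cr ` H \<Longrightarrow> c2 \<in> cr ` H \<Longrightarrow> c1 \<noteq> c2 \<Longrightarrow> c1 \<inter> c2 = {}"
      unfolding cr_def using orbits_disj[OF perm_sg] by blast
  qed
  then show ?thesis using U crossings_eq by simp
qed

end





context LD
begin

abbreviation fc where "fc \<equiv> face_of sg al"

definition shf :: "'d \<Rightarrow> 'd set" where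
  "shf d = fc (if sh d then d else sg (sg (sg d)))"

abbreviation TV where "TV \<equiv> tait_vertices H sg al sh"
abbreviation ends where "ends \<equiv> tait_ends sg al sh"

definition tE :: "'d set set \<Rightarrow> ('d set \<times> 'd set) set" where
  "tE T = {(x, y). \<exists>c\<in>T. x \<in> ends c \<and> y \<in> ends c}"

definition kk :: "'d set set \<Rightarrow> nat" where
  "kk T = card (comps TV (tE T))"

definition pT :: "'d set set \<Rightarrow> 'd \<Rightarrow> 'd" where
  "pT T y = (if (cr y \<in> T) \<noteq> sh y then sg y else sg (sg (sg y)))"

definition stT :: "'d set set \<Rightarrow> 'd \<Rightarrow> 'd" where
  "stT T d = pT T (al d)"

definition Wc :: "bool \<Rightarrow> 'd set" where
  "Wc b = {d \<in> H. sh d = b}"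

definition cc :: "bool \<Rightarrow> 'd set set \<Rightarrow> nat" where
  "cc b T = card (ld_orbit (stT T) ` Wc b)"

lemma fc_def': "fc d = ld_orbit (al \<circ> sg) d" unfolding face_of_def ..

lemma fc_sh:
  assumes d: "d \<in> H" and x: "x \<in> fc d"
  shows "sh x = sh d"
proof -
  have "sh (((al \<circ> sg) ^^ n) d) = sh d \<and> ((al \<circ> sg) ^^ n) d \<in> H" for n
  proof (induction n)
    case 0 then show ?case using d by simp
  next
    case (Suc n) then show ?case using sh_alsg by simp
  qed
  then show ?thesis using x unfolding fc_def' ld_orbit_def by blast
qed

lemma fc_eq: "d \<in> H \<Longrightarrow> e \<in> fc d \<Longrightarrow> fc e = fc d"
  unfolding fc_def' by (rule orbit_eq[OF perm_fs])

lemma fc_sub: "d \<in> H \<Longrightarrow> fc d \<subseteq> H"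
  unfolding fc_def' by (rule ld_orbit_sub[OF perm_fs])

lemma fc_alsg3: "x \<in> H \<Longrightarrow> fc (sg (sg (sg (al x)))) = fc x"
proof -
  assume x: "x \<in> H"
  have "(al \<circ> sg) (sg (sg (sg (al x)))) = x" using x by simp
  then have "x \<in> fc (sg (sg (sg (al x))))" unfolding fc_def' by (metis p_in_orbit)
  then show ?thesis using fc_eq x by (metis sg_in al_in)
qed

lemma fc_al: "x \<in> H \<Longrightarrow> fc (al x) = fc (sg (sg (sg x)))"
proof -
  assume x: "x \<in> H"
  have "(al \<circ> sg) (sg (sg (sg x))) = al x" using x by simp
  then have "al x \<in> fc (sg (sg (sg x)))" unfolding fc_def' by (metis p_in_orbit)
  then show ?thesis using fc_eq x by (metis sg_in)
qed

lemma shf_al [simp]: "x \<in> H \<Longrightarrow> shf (al x) = shf x"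
  unfolding shf_def using fc_alsg3 fc_al by auto

lemma ends_cr: "y \<in> H \<Longrightarrow> ends (cr y) = {shf y, shf (sg (sg y))}"
proof -
  assume y: "y \<in> H"
  have s: "{d \<in> cr y. sh d} = (if sh y then {y, sg (sg y)} else {sg y, sg (sg (sg y))})"
    unfolding cr_eq[OF y] using y by auto
  have "sg (sg (sg (sg (sg y)))) = sg y" using y by simp
  then show ?thesis unfolding tait_ends_def s shf_def using y by auto
qed

lemma shf_in_ends: "y \<in> H \<Longrightarrow> shf y \<in> ends (cr y)"
  using ends_cr by blast

lemma ends_sub: "y \<in> H \<Longrightarrow> ends (cr y) \<subseteq> TV"
  unfolding tait_ends_def tait_vertices_def using cr_sub by blast

lemma shf_TV: "y \<in> H \<Longrightarrow> shf y \<in> TV"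
  using shf_in_ends ends_sub by blast

lemma pT_props:
  assumes y: "y \<in> H"
  shows "pT T y \<in> H" "cr (pT T y) = cr y" "sh (pT T y) \<longleftrightarrow> \<not> sh y" "pT T (pT T y) = y"
proof -
  show "pT T y \<in> H" "cr (pT T y) = cr y" "sh (pT T y) \<longleftrightarrow> \<not> sh y"
    unfolding pT_def using y by auto
  show "pT T (pT T y) = y"
  proof (cases "(cr y \<in> T) \<noteq> sh y")
    case True
    then show ?thesis unfolding pT_def using y by simp
  next
    case False
    then show ?thesis unfolding pT_def using y by simp
  qed
qed

lemma stT_props:
  assumes d: "d \<in> H"
  shows "stT T d \<in> H" "sh (stT T d) = sh d"
  unfolding stT_def using pT_props d by auto

lemma stT_inj: "inj_on (stT T) H"
proof (rule inj_onI)
  fix x y assume "x \<in> H" "y \<in> H" "stT T x = stT T y"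
  then have "pT T (pT T (al x)) = pT T (pT T (al y))" unfolding stT_def by simp
  then have "al x = al y" using pT_props(4) \<open>x \<in> H\<close> \<open>y \<in> H\<close> by simp
  then show "x = y" using \<open>x \<in> H\<close> \<open>y \<in> H\<close> by (metis al_al)
qed

lemma perm_stT: "perm_on (stT T) H"
  unfolding perm_on_def using finH stT_props stT_inj by blast

lemma Wc_sub: "Wc b \<subseteq> H" unfolding Wc_def by blast

lemma perm_stT_W: "perm_on (stT T) (Wc b)"
  unfolding perm_on_def
proof (intro conjI)
  show "finite (Wc b)" using finH Wc_sub finite_subset by blast
  show "\<forall>x\<in>Wc b. stT T x \<in> Wc b" unfolding Wc_def using stT_props by simp
  show "inj_on (stT T) (Wc b)" using stT_inj Wc_sub by (rule inj_on_subset)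
qed

lemma sym_tE: "sym (tE T)" unfolding tE_def sym_def by blast

lemma tE_insert: "tE (insert e T) = tE T \<union> ends e \<times> ends e"
  unfolding tE_def by blast

lemma shf_pT:
  assumes y: "y \<in> H"
  shows "(shf y, shf (pT T y)) \<in> (tE T)\<^sup>*"
proof (cases "cr y \<in> T")
  case True
  have "shf y \<in> ends (cr y)" using shf_in_ends y .
  moreover have "shf (pT T y) \<in> ends (cr y)" using shf_in_ends[OF pT_props(1)[OF y]] pT_props(2)[OF y] by simp
  ultimately have "(shf y, shf (pT T y)) \<in> tE T" unfolding tE_def using True by blast
  then show ?thesis by blast
next
  case False
  have "shf (pT T y) = shf y"
  proof (cases "sh y")
    case True
    then have "pT T y = sg y" unfolding pT_def using False by simp
    then show ?thesis unfolding shf_def using True y by simp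
  next
    case F2: False
    then have "pT T y = sg (sg (sg y))" unfolding pT_def using False by simp
    then show ?thesis unfolding shf_def using F2 y by simp
  qed
  then show ?thesis by simp
qed

lemma shf_stT: "x \<in> H \<Longrightarrow> (shf x, shf (stT T x)) \<in> (tE T)\<^sup>*"
  unfolding stT_def using shf_pT[of "al x" T] by simp

lemma shf_stT_iter: "x \<in> H \<Longrightarrow> (shf x, shf ((stT T ^^ n) x)) \<in> (tE T)\<^sup>*"
proof (induction n)
  case 0 then show ?case by simp
next
  case (Suc n)
  have "(stT T ^^ n) x \<in> H" using po_funpow_in[OF perm_stT Suc.prems] .
  then have "(shf ((stT T ^^ n) x), shf ((stT T ^^ Suc n) x)) \<in> (tE T)\<^sup>*"
    using shf_stT by simp
  then show ?case using Suc by (meson rtrancl_trans)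
qed

end





context LD
begin

lemma crossings_fin: "finite (crossings H sg)" unfolding crossings_eq using finH by simp

lemma switch:
  assumes e: "e \<in> crossings H sg" and eT: "e \<notin> T"
  obtains u where "u \<in> H" "cr u = e" "sh u = (\<not> b)"
    "al u \<in> Wc b" "al (sg (sg u)) \<in> Wc b" "al u \<noteq> al (sg (sg u))"
    "\<forall>z\<in>Wc b. stT (insert e T) z = swp (stT T) (al u) (al (sg (sg u))) z"
proof -
  obtain y where y: "y \<in> H" "e = cr y" using e crossings_eq by blast
  define u where "u = (if sh y = (\<not> b) then y else sg y)"
  have u: "u \<in> H" "cr u = e" "sh u = (\<not> b)" unfolding u_def using y by auto
  have x12: "al u \<in> Wc b" "al (sg (sg u)) \<in> Wc b" unfolding Wc_def using u by auto
  have ne: "al u \<noteq> al (sg (sg u))" using u(1) sg2_ne[OF u(1)] by (metis al_al sg_in)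
  have eT': "e \<in> insert e T" by simp
  have crs: "cr (sg (sg u)) = e" using u by simp
  have pt: "\<forall>z\<in>Wc b. stT (insert e T) z = swp (stT T) (al u) (al (sg (sg u))) z"
  proof
    fix z assume z: "z \<in> Wc b"
    have zH: "z \<in> H" using z Wc_sub by blast
    show "stT (insert e T) z = swp (stT T) (al u) (al (sg (sg u))) z"
    proof (cases "z = al u")
      case True
      have "stT (insert e T) z = pT (insert e T) u" unfolding stT_def True using u by simp
      moreover have "swp (stT T) (al u) (al (sg (sg u))) z = pT T (sg (sg u))"
        unfolding swp_def stT_def using True u by simp
      moreover have "pT (insert e T) u = pT T (sg (sg u))"
        unfolding pT_def using u crs eT by auto
      ultimately show ?thesis by simp
    next
      case F1: False
      show ?thesis
      proof (cases "z = al (sg (sg u))")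
        case True
        have "stT (insert e T) z = pT (insert e T) (sg (sg u))" unfolding stT_def True using u by simp
        moreover have "swp (stT T) (al u) (al (sg (sg u))) z = pT T u"
          unfolding swp_def stT_def using True F1 u by simp
        moreover have "pT (insert e T) (sg (sg u)) = pT T u"
          unfolding pT_def using u crs eT by auto
        ultimately show ?thesis by simp
      next
        case False
        have a1: "al z \<noteq> u" using F1 zH by (metis al_al)
        have a2: "al z \<noteq> sg (sg u)" using False zH by (metis al_al)
        have shz: "sh (al z) = sh u" using z zH u unfolding Wc_def by simp
        have "cr (al z) \<noteq> e"
        proof
          assume "cr (al z) = e"
          then have "al z \<in> cr u" using u(2) unfolding cr_def by (metis orbit_self)
          then have "al z \<in> {u, sg u, sg (sg u), sg (sg (sg u))}" using cr_eq[OF u(1)] by simp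
          then show False using a1 a2 shz u(1) by auto
        qed
        then have "pT (insert e T) (al z) = pT T (al z)" unfolding pT_def by simp
        then show ?thesis unfolding swp_def stT_def using F1 False by simp
      qed
    qed
  qed
  show ?thesis using that u x12 ne pt by blast
qed

definition gam :: "bool \<Rightarrow> 'd set set \<Rightarrow> int" where
  "gam b T = 2 * int (kk T) + int (card T) - int (card TV) - int (cc b T)"

lemma TV_fin: "finite TV" unfolding tait_vertices_def using finH by simp

lemma gam_step:
  assumes TS: "T \<subseteq> crossings H sg" and e: "e \<in> crossings H sg" and eT: "e \<notin> T"
  shows "gam b T \<le> gam b (insert e T)"
proof -
  obtain u where u: "u \<in> H" "cr u = e" "sh u = (\<not> b)"
    and x12: "al u \<in> Wc b" "al (sg (sg u)) \<in> Wc b" "al u \<noteq> al (sg (sg u))"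
    and pt: "\<forall>z\<in>Wc b. stT (insert e T) z = swp (stT T) (al u) (al (sg (sg u))) z"
    using switch[OF e eT] by blast
  define x1 where "x1 = al u"
  define x2 where "x2 = al (sg (sg u))"
  define q where "q = stT T"
  have q: "perm_on q (Wc b)" unfolding q_def by (rule perm_stT_W)
  have cc': "cc b (insert e T) = card (ld_orbit (swp q x1 x2) ` Wc b)"
  proof -
    have "ld_orbit (stT (insert e T)) z = ld_orbit (swp q x1 x2) z" if z: "z \<in> Wc b" for z
    proof (rule orbit_cong_set[OF z])
      show "\<forall>z\<in>Wc b. stT (insert e T) z \<in> Wc b" using perm_stT_W unfolding perm_on_def by blast
      show "\<forall>z\<in>Wc b. stT (insert e T) z = swp q x1 x2 z" using pt unfolding q_def x1_def x2_def .
    qed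
    then show ?thesis unfolding cc_def by (metis (no_types, lifting) image_cong)
  qed
  have cc0: "cc b T = card (ld_orbit q ` Wc b)" unfolding cc_def q_def ..
  have endse: "ends e = {shf u, shf (sg (sg u))}" using ends_cr[OF u(1)] u(2) by simp
  have finT: "finite T" using TS crossings_fin finite_subset by blast
  have cT: "card (insert e T) = card T + 1" using finT eT by simp
  have tEi: "tE (insert e T) = tE T \<union> {shf u, shf (sg (sg u))} \<times> {shf u, shf (sg (sg u))}"
    using tE_insert endse by simp
  show ?thesis
  proof (cases "(shf u, shf (sg (sg u))) \<in> (tE T)\<^sup>*")
    case True
    have "kk (insert e T) = kk T" unfolding kk_def tEi comps_def comps_same[OF sym_tE True] ..
    moreover have "int (cc b (insert e T)) \<le> int (cc b T) + 1"
    proof (cases "x2 \<in> ld_orbit q x1")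
      case True
      show ?thesis using swp_split[OF q x12(1,2)[folded x1_def x2_def] x12(3)[folded x1_def x2_def] True] cc' cc0 by simp
    next
      case False
      show ?thesis using swp_merge[OF q x12(1,2)[folded x1_def x2_def] False] cc' cc0 by simp
    qed
    ultimately show ?thesis unfolding gam_def using cT by simp
  next
    case False
    have uv: "shf u \<in> TV" "shf (sg (sg u)) \<in> TV" using shf_TV u(1) by auto
    have "kk (insert e T) + 1 = kk T"
      unfolding kk_def tEi using comps_merge[OF TV_fin sym_tE uv False] .
    moreover have "x2 \<notin> ld_orbit q x1"
    proof
      assume "x2 \<in> ld_orbit q x1"
      then obtain n where n: "x2 = (q ^^ n) x1" unfolding ld_orbit_def by blast
      have "x1 \<in> H" unfolding x1_def using u(1) by simp
      then have "(shf x1, shf x2) \<in> (tE T)\<^sup>*" using shf_stT_iter n unfolding q_def by simp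
      moreover have "shf x1 = shf u" "shf x2 = shf (sg (sg u))" unfolding x1_def x2_def using u(1) by simp_all
      ultimately show False using False by simp
    qed
    then have "cc b (insert e T) + 1 = cc b T"
      using swp_merge[OF q x12(1,2)[folded x1_def x2_def]] cc' cc0 by simp
    ultimately show ?thesis unfolding gam_def using cT by simp
  qed
qed

lemma gam_mono:
  assumes "finite D" "T \<union> D \<subseteq> crossings H sg"
  shows "gam b T \<le> gam b (T \<union> D)"
  using assms
proof (induction D rule: finite_induct)
  case empty then show ?case by simp
next
  case (insert e D)
  have IH: "gam b T \<le> gam b (T \<union> D)" using insert by simp
  show ?case
  proof (cases "e \<in> T")
    case True
    then have "T \<union> insert e D = T \<union> D" by blast
    then show ?thesis using IH by simp
  next
    case False
    have "gam b (T \<union> D) \<le> gam b (insert e (T \<union> D))"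
      using gam_step[of "T \<union> D" e b] insert False by simp
    then show ?thesis using IH by simp
  qed
qed

end





context LD
begin

lemma st_al_st: "z \<in> H \<Longrightarrow> stT T (al (stT T z)) = al z"
  unfolding stT_def using pT_props by simp

lemma orb_al_sub:
  assumes x: "x \<in> H"
  shows "al ` ld_orbit (stT T) x \<subseteq> ld_orbit (stT T) (al x)"
proof -
  have "al ((stT T ^^ n) x) \<in> ld_orbit (stT T) (al x)" for n
  proof (induction n)
    case 0 then show ?case by simp
  next
    case (Suc n)
    define w where "w = (stT T ^^ n) x"
    have wH: "w \<in> H" unfolding w_def using po_funpow_in[OF perm_stT x] .
    have a: "stT T (al (stT T w)) = al w" using st_al_st[OF wH] .
    have h1: "al (stT T w) \<in> H" using wH stT_props by simp
    have "al w \<in> ld_orbit (stT T) (al (stT T w))" using a by (metis p_in_orbit)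
    then have "ld_orbit (stT T) (al w) = ld_orbit (stT T) (al (stT T w))"
      using orbit_eq[OF perm_stT h1] by blast
    moreover have "ld_orbit (stT T) (al w) = ld_orbit (stT T) (al x)"
      using orbit_eq[OF perm_stT al_in[OF x]] Suc unfolding w_def by blast
    moreover have "al (stT T w) \<in> ld_orbit (stT T) (al (stT T w))" by simp
    ultimately show ?case unfolding w_def by simp
  qed
  then show ?thesis unfolding ld_orbit_def by blast
qed

lemma orb_al:
  assumes x: "x \<in> H"
  shows "ld_orbit (stT T) (al x) = al ` ld_orbit (stT T) x"
proof
  show "al ` ld_orbit (stT T) x \<subseteq> ld_orbit (stT T) (al x)" using orb_al_sub[OF x] .
  have "al ` ld_orbit (stT T) (al x) \<subseteq> ld_orbit (stT T) x"
    using orb_al_sub[OF al_in[OF x]] x by simp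
  then have "al ` al ` ld_orbit (stT T) (al x) \<subseteq> al ` ld_orbit (stT T) x" by blast
  moreover have "al ` al ` ld_orbit (stT T) (al x) = ld_orbit (stT T) (al x)"
  proof -
    have sub: "ld_orbit (stT T) (al x) \<subseteq> H" using ld_orbit_sub[OF perm_stT al_in[OF x]] .
    have "al ` al ` Y = Y" if "Y \<subseteq> H" for Y
    proof -
      have "al ` al ` Y = (al \<circ> al) ` Y" by (simp add: image_comp)
      also have "\<dots> = Y" using that by (auto simp: image_iff) (metis al_al subsetD)
      finally show ?thesis .
    qed
    then show ?thesis using sub by blast
  qed
  ultimately show "ld_orbit (stT T) (al x) \<subseteq> al ` ld_orbit (stT T) x" by simp
qed

lemma cc_colour: "cc b T = cc (\<not> b) T"
proof -
  have W: "Wc (\<not> b) = al ` Wc b"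
  proof
    show "al ` Wc b \<subseteq> Wc (\<not> b)" unfolding Wc_def by auto
    show "Wc (\<not> b) \<subseteq> al ` Wc b"
    proof
      fix x assume "x \<in> Wc (\<not> b)"
      then have x: "x \<in> H" "sh x = (\<not> b)" unfolding Wc_def by auto
      then have "al x \<in> Wc b" "al (al x) = x" unfolding Wc_def by auto
      then show "x \<in> al ` Wc b" by (metis imageI)
    qed
  qed
  have img: "ld_orbit (stT T) ` Wc (\<not> b) = image al ` (ld_orbit (stT T) ` Wc b)"
  proof
    show "ld_orbit (stT T) ` Wc (\<not> b) \<subseteq> image al ` (ld_orbit (stT T) ` Wc b)"
    proof
      fix Y assume "Y \<in> ld_orbit (stT T) ` Wc (\<not> b)"
      then obtain x where x: "x \<in> Wc b" "Y = ld_orbit (stT T) (al x)" unfolding W by blast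
      then have "Y = al ` ld_orbit (stT T) x" using orb_al Wc_sub by blast
      then show "Y \<in> image al ` (ld_orbit (stT T) ` Wc b)" using x(1) by blast
    qed
    show "image al ` (ld_orbit (stT T) ` Wc b) \<subseteq> ld_orbit (stT T) ` Wc (\<not> b)"
    proof
      fix Y assume "Y \<in> image al ` (ld_orbit (stT T) ` Wc b)"
      then obtain x where x: "x \<in> Wc b" "Y = al ` ld_orbit (stT T) x" by blast
      then have "Y = ld_orbit (stT T) (al x)" using orb_al Wc_sub by blast
      moreover have "al x \<in> Wc (\<not> b)" unfolding W using x(1) by blast
      ultimately show "Y \<in> ld_orbit (stT T) ` Wc (\<not> b)" by blast
    qed
  qed
  have "inj_on (image al) (ld_orbit (stT T) ` Wc b)"
  proof (rule inj_on_subset[OF inj_on_image_Pow[OF al_inj]])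
    show "ld_orbit (stT T) ` Wc b \<subseteq> Pow H"
      using ld_orbit_sub[OF perm_stT] Wc_sub by blast
  qed
  then show ?thesis unfolding cc_def img by (simp add: card_image)
qed

lemma perm_fs_W: "perm_on (al \<circ> sg) (Wc b)"
  unfolding perm_on_def
proof (intro conjI)
  show "finite (Wc b)" using finH Wc_sub finite_subset by blast
  show "\<forall>x\<in>Wc b. (al \<circ> sg) x \<in> Wc b" unfolding Wc_def using sh_alsg by simp
  show "inj_on (al \<circ> sg) (Wc b)" using perm_fs Wc_sub unfolding perm_on_def by (meson inj_on_subset)
qed

lemma cc_face:
  assumes "\<forall>x\<in>Wc b. stT T x = sg (sg (sg (al x)))"
  shows "cc b T = card (fc ` Wc b)"
proof -
  have "ld_orbit (stT T) x = fc x" if x: "x \<in> Wc b" for x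
  proof -
    have "\<forall>x\<in>Wc b. (al \<circ> sg) (stT T x) = x"
    proof
      fix x assume x: "x \<in> Wc b"
      then have xH: "x \<in> H" using Wc_sub by blast
      show "(al \<circ> sg) (stT T x) = x" using assms x xH by simp
    qed
    then show ?thesis unfolding fc_def' using orbit_inverse_eq[OF perm_stT_W perm_fs_W _ x] by blast
  qed
  then show ?thesis unfolding cc_def by (metis (no_types, lifting) image_cong)
qed

lemma cc_empty: "cc True {} = card TV"
proof -
  have "\<forall>x\<in>Wc True. stT {} x = sg (sg (sg (al x)))"
    unfolding Wc_def stT_def pT_def by auto
  then have "cc True {} = card (fc ` Wc True)" by (rule cc_face)
  moreover have "Wc True = {d \<in> H. sh d}" unfolding Wc_def by simp
  ultimately show ?thesis unfolding tait_vertices_def by simp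
qed

lemma cc_all: "cc False (crossings H sg) = card (fc ` Wc False)"
proof (rule cc_face)
  show "\<forall>x\<in>Wc False. stT (crossings H sg) x = sg (sg (sg (al x)))"
    unfolding Wc_def stT_def pT_def crossings_eq by auto
qed

lemma faces_split: "card (fc ` H) = card TV + card (fc ` Wc False)"
proof -
  have U: "fc ` H = fc ` Wc True \<union> fc ` Wc False" unfolding Wc_def by auto
  have D: "fc ` Wc True \<inter> fc ` Wc False = {}"
  proof (rule ccontr)
    assume "fc ` Wc True \<inter> fc ` Wc False \<noteq> {}"
    then obtain a c where ac: "a \<in> Wc True" "c \<in> Wc False" "fc a = fc c" by blast
    have "a \<in> fc a" unfolding fc_def' by simp
    then have "a \<in> fc c" using ac by simp
    then have "sh a = sh c" using fc_sh ac Wc_sub by blast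
    then show False using ac unfolding Wc_def by simp
  qed
  have "Wc True = {d \<in> H. sh d}" unfolding Wc_def by simp
  then have "TV = fc ` Wc True" unfolding tait_vertices_def by simp
  then show ?thesis unfolding U using D finH Wc_sub
    by (metis card_Un_disjoint finite_imageI finite_subset)
qed

lemma euler: "int (card (crossings H sg)) - 2 * int (card (crossings H sg)) + int (card (fc ` H)) = 2"
proof -
  have "ld_norbits sg H = card (crossings H sg)" unfolding ld_norbits_def crossings_def ..
  moreover have "card H div 2 = 2 * card (crossings H sg)" using card_H by simp
  moreover have "ld_norbits (al \<circ> sg) H = card (fc ` H)"
    unfolding ld_norbits_def face_of_def by simp
  ultimately show ?thesis using ldc(7) by simp
qed

lemma shf_conn_all:
  assumes x: "x \<in> H" and y: "y \<in> H"
  shows "(shf x, shf y) \<in> (tE (crossings H sg))\<^sup>*"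
proof -
  have "(x, y) \<in> (ld_gen H sg al)\<^sup>*" using ldc(6) x y by blast
  then show ?thesis
  proof (induction rule: rtrancl_induct)
    case base then show ?case by simp
  next
    case (step y z)
    from step.hyps(2) obtain d where d: "d \<in> H" "y = d" "z = sg d \<or> z = al d"
      unfolding ld_gen_def by blast
    have "(shf y, shf z) \<in> (tE (crossings H sg))\<^sup>*"
    proof (cases "z = sg d")
      case True
      have "shf d \<in> ends (cr d)" "shf (sg d) \<in> ends (cr d)"
        using shf_in_ends[OF d(1)] shf_in_ends[OF sg_in[OF d(1)]] d(1) by simp_all
      moreover have "cr d \<in> crossings H sg" using d(1) crossings_eq by blast
      ultimately have "(shf d, shf (sg d)) \<in> tE (crossings H sg)" unfolding tE_def by blast
      then show ?thesis using True d by blast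
    next
      case False
      then have "z = al d" using d by blast
      then show ?thesis using d by simp
    qed
    then show ?case using step.IH by (meson rtrancl_trans)
  qed
qed

lemma TV_ne: "TV \<noteq> {}"
proof -
  obtain d where d: "d \<in> H" using Hne by blast
  have "shf d \<in> TV" using shf_TV[OF d] .
  then show ?thesis by blast
qed

lemma TV_shf: "v \<in> TV \<Longrightarrow> \<exists>x\<in>H. v = shf x"
  unfolding tait_vertices_def shf_def by auto

lemma kk_all: "kk (crossings H sg) = 1"
  unfolding kk_def
proof (subst comps_one_iff[OF sym_tE TV_ne], intro ballI)
  fix u v assume "u \<in> TV" "v \<in> TV"
  then obtain x y where "x \<in> H" "y \<in> H" "u = shf x" "v = shf y" using TV_shf by metis
  then show "(u, v) \<in> (tE (crossings H sg))\<^sup>*" using shf_conn_all by simp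
qed

lemma kk_empty: "kk {} = card TV"
proof -
  have "tE {} = {}" unfolding tE_def by simp
  then show ?thesis unfolding kk_def using comps_empty by simp
qed

lemma gam_empty: "gam b {} = 0"
proof -
  have "cc b {} = card TV" using cc_empty cc_colour[of False "{}"] by (cases b) auto
  then show ?thesis unfolding gam_def using kk_empty by simp
qed

lemma gam_all: "gam b (crossings H sg) = 0"
proof -
  have "cc b (crossings H sg) = card (fc ` Wc False)" using cc_all cc_colour[of True "crossings H sg"] by (cases b) auto
  then show ?thesis unfolding gam_def using kk_all euler faces_split by simp
qed

lemma gam_zero:
  assumes T: "T \<subseteq> crossings H sg"
  shows "gam b T = 0"
proof -
  have fT: "finite T" using T crossings_fin finite_subset by blast
  have "gam b {} \<le> gam b ({} \<union> T)" using gam_mono[OF fT, where T="{}" and b=b] T by simp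
  moreover have "gam b T \<le> gam b (T \<union> (crossings H sg - T))"
    using gam_mono[of "crossings H sg - T" T b] crossings_fin T by blast
  moreover have "T \<union> (crossings H sg - T) = crossings H sg" using T by blast
  ultimately show ?thesis using gam_empty gam_all by simp
qed

lemma cc_formula:
  assumes "T \<subseteq> crossings H sg"
  shows "int (cc b T) = 2 * int (kk T) + int (card T) - int (card TV)"
  using gam_zero[OF assms, of b] unfolding gam_def by simp

end





context LD
begin

definition PP :: "'d set set" where "PP = {c \<in> crossings H sg. tait_positive ov sh c}"

definition TT :: "'d set set \<Rightarrow> 'd set set" where "TT S = (PP - S) \<union> (S - PP)"

lemma pos_iff: "y \<in> H \<Longrightarrow> tait_positive ov sh (cr y) \<longleftrightarrow> (ov y = sh y)"
  unfolding tait_positive_def cr_eq by auto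

lemma cr_in_crossings: "y \<in> H \<Longrightarrow> cr y \<in> crossings H sg" using crossings_eq by blast

lemma pT_TT:
  assumes y: "y \<in> H"
  shows "pT (TT S) y = (if cr y \<in> S then (if ov y then sg y else sg (sg (sg y)))
                         else partnerA sg ov y)"
proof -
  have P: "cr y \<in> PP \<longleftrightarrow> (ov y = sh y)" unfolding PP_def using pos_iff[OF y] cr_in_crossings[OF y] by simp
  show ?thesis unfolding pT_def TT_def partnerA_def f3 using P by auto
qed

lemma TT_empty: "TT {} = PP" unfolding TT_def by simp

lemma stepA_eq: "d \<in> H \<Longrightarrow> stepA sg al ov d = stT PP d"
  unfolding stepA_def stT_def using pT_TT[of "al d" "{}"] TT_empty by simp

lemma partnerA_eq: "y \<in> H \<Longrightarrow> partnerA sg ov y = pT PP y"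
  using pT_TT[of y "{}"] TT_empty by simp

lemma rdarts_eq: "rdarts H sh ou = Wc (\<not> sh ou)"
  unfolding rdarts_def Wc_def by auto

lemma redge_eq:
  assumes d: "d \<in> Wc (\<not> sh ou)"
  shows "redge H sg al ov sh ou d = al (sg (sg (al d)))"
proof -
  have dH: "d \<in> H" using d Wc_sub by blast
  have "al (sg (sg (al d))) \<in> rdarts H sh ou" unfolding rdarts_eq Wc_def using d dH unfolding Wc_def by simp
  then show ?thesis unfolding redge_def f2 by simp
qed

lemma rsub_sub: "rsub H sg al sh ou S \<subseteq> Wc (\<not> sh ou)"
  unfolding rsub_def rdarts_eq by blast

lemma rsub_iff: "d \<in> Wc (\<not> sh ou) \<Longrightarrow> d \<in> rsub H sg al sh ou S \<longleftrightarrow> cr (al d) \<in> S"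
  unfolding rsub_def rdarts_eq cr_def by blast

lemma st_in_R:
  assumes d: "d \<in> rsub H sg al sh ou S"
  shows "stT (TT S) d = stepA sg al ov (redge H sg al ov sh ou d)"
proof -
  have dW: "d \<in> Wc (\<not> sh ou)" using d rsub_sub by blast
  then have dH: "d \<in> H" using Wc_sub by blast
  have S: "cr (al d) \<in> S" using rsub_iff[OF dW] d by blast
  have "stepA sg al ov (redge H sg al ov sh ou d) = partnerA sg ov (sg (sg (al d)))"
    unfolding redge_eq[OF dW] stepA_def using dH by simp
  also have "\<dots> = (if ov (al d) then sg (al d) else sg (sg (sg (al d))))"
    unfolding partnerA_def f3 using dH by simp
  also have "\<dots> = stT (TT S) d" unfolding stT_def using pT_TT[of "al d" S] S dH by simp
  finally show ?thesis by simp
qed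

lemma st_notin_R:
  assumes d: "d \<in> Wc (\<not> sh ou)" "d \<notin> rsub H sg al sh ou S"
  shows "stT (TT S) d = stepA sg al ov d"
proof -
  have dH: "d \<in> H" using d Wc_sub by blast
  have S: "cr (al d) \<notin> S" using rsub_iff[OF d(1)] d(2) by blast
  show ?thesis unfolding stT_def stepA_def using pT_TT[of "al d" S] S dH by simp
qed

lemma rrot_eq:
  assumes d: "d \<in> rsub H sg al sh ou S"
  shows "rrot H sg al ov sh ou S (redge H sg al ov sh ou d) = fret (stT (TT S)) (rsub H sg al sh ou S) d"
proof -
  define R where "R = rsub H sg al sh ou S"
  define q where "q = stT (TT S)"
  define a where "a = stepA sg al ov"
  define r where "r = redge H sg al ov sh ou d"
  define K where "K = (LEAST k. 0 < k \<and> (q ^^ k) d \<in> R)"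
  have RW: "R \<subseteq> Wc (\<not> sh ou)" unfolding R_def by (rule rsub_sub)
  have q: "perm_on q (Wc (\<not> sh ou))" unfolding q_def by (rule perm_stT_W)
  have dR: "d \<in> R" using d R_def by simp
  have dW: "d \<in> Wc (\<not> sh ou)" using dR RW by blast
  have fb: "fret q R d \<in> R" "\<And>k. 0 < k \<Longrightarrow> k < K \<Longrightarrow> (q ^^ k) d \<notin> R" "0 < K"
    using fret_basic[OF q RW dR] unfolding K_def by auto
  have fK: "fret q R d = (q ^^ K) d" unfolding fret_def K_def ..
  have agree: "0 < k \<longrightarrow> k \<le> K \<longrightarrow> (a ^^ k) r = (q ^^ k) d" for k
  proof (induction k)
    case 0 then show ?case by simp
  next
    case (Suc k)
    show ?case
    proof (intro impI)
      assume k: "Suc k \<le> K"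
      show "(a ^^ Suc k) r = (q ^^ Suc k) d"
      proof (cases "k = 0")
        case True
        then show ?thesis using st_in_R[OF d] unfolding a_def q_def r_def by simp
      next
        case False
        have eq: "(a ^^ k) r = (q ^^ k) d" using Suc.IH False k by simp
        have nR: "(q ^^ k) d \<notin> R" using fb(2)[of k] False k by simp
        have W: "(q ^^ k) d \<in> Wc (\<not> sh ou)" using po_funpow_in[OF q dW] .
        have "q ((q ^^ k) d) = a ((q ^^ k) d)"
          using st_notin_R[OF W] nR unfolding q_def a_def R_def by simp
        then show ?thesis using eq by simp
      qed
    qed
  qed
  have LK: "(LEAST k. 0 < k \<and> (a ^^ k) r \<in> R) = K"
  proof (rule Least_equality)
    show "0 < K \<and> (a ^^ K) r \<in> R" using agree[of K] fb(1,3) fK by simp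
    show "\<And>y. 0 < y \<and> (a ^^ y) r \<in> R \<Longrightarrow> K \<le> y"
    proof -
      fix y assume y: "0 < y \<and> (a ^^ y) r \<in> R"
      show "K \<le> y"
      proof (rule ccontr)
        assume "\<not> K \<le> y"
        then have "y < K" by simp
        then show False using agree[of y] fb(2)[of y] y by simp
      qed
    qed
  qed
  have "rrot H sg al ov sh ou S r = (a ^^ K) r"
    unfolding rrot_def a_def[symmetric] R_def[symmetric] LK ..
  also have "\<dots> = (q ^^ K) d" using agree[of K] fb(3) by simp
  finally have "rrot H sg al ov sh ou S r = fret q R d" using fK by simp
  then show ?thesis unfolding r_def q_def R_def .
qed

end





context LD
begin

definition Rel :: "('d \<times> 'd) set" where
  "Rel = {(d, al d) |d. d \<in> H} \<union> {(d, partnerA sg ov d) |d. d \<in> H}"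

lemma circles_def': "allA_circles H sg al ov = H // Rel\<^sup>*"
  unfolding allA_circles_def Rel_def ..

lemma class_eq:
  assumes w: "w \<in> H"
  shows "Rel\<^sup>* `` {w} = ld_orbit (stT PP) w \<union> al ` ld_orbit (stT PP) w"
proof
  define X where "X = ld_orbit (stT PP) w"
  have XH: "X \<subseteq> H" unfolding X_def using ld_orbit_sub[OF perm_stT w] .
  have stX: "stT PP y \<in> X" if "y \<in> X" for y
  proof -
    have "ld_orbit (stT PP) y \<subseteq> X" using orbit_mono[of y "stT PP" w] that unfolding X_def by blast
    moreover have "stT PP y \<in> ld_orbit (stT PP) y" by simp
    ultimately show ?thesis by blast
  qed
  have cl: "z \<in> X \<union> al ` X" if xin: "x \<in> X \<union> al ` X" and rel: "(x, z) \<in> Rel" for x z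
  proof -
    from rel obtain d where d: "d \<in> H" "x = d" "z = al d \<or> z = partnerA sg ov d"
      unfolding Rel_def by blast
    show ?thesis
    proof (cases "x \<in> X")
      case True
      show ?thesis
      proof (cases "z = al d")
        case True then show ?thesis using \<open>x \<in> X\<close> d by blast
      next
        case False
        then have z: "z = pT PP x" using d partnerA_eq by simp
        obtain y where y: "y \<in> X" "stT PP y = x"
          using po_pre_orbit[OF perm_stT w] True unfolding X_def by blast
        have yH: "y \<in> H" using y XH by blast
        have "pT PP x = al y" using y(2) pT_props(4)[OF al_in[OF yH], where T=PP] unfolding stT_def by metis
        then show ?thesis using z y by blast
      qed
    next
      case False
      then obtain y where y: "y \<in> X" "x = al y" using xin by blast
      have yH: "y \<in> H" using y XH by blast
      show ?thesis
      proof (cases "z = al d")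
        case True then show ?thesis using y yH d by simp
      next
        case F2: False
        then have "z = pT PP x" using d partnerA_eq by simp
        then have "z = stT PP y" unfolding stT_def using y by simp
        then show ?thesis using stX y by blast
      qed
    qed
  qed
  show "Rel\<^sup>* `` {w} \<subseteq> X \<union> al ` X"
  proof
    fix z assume "z \<in> Rel\<^sup>* `` {w}"
    then have "(w, z) \<in> Rel\<^sup>*" by simp
    then show "z \<in> X \<union> al ` X"
    proof (induction rule: rtrancl_induct)
      case base then show ?case unfolding X_def by simp
    next
      case (step y z) then show ?case using cl by blast
    qed
  qed
  have stp: "(z, stT PP z) \<in> Rel\<^sup>*" if "z \<in> H" for z
  proof -
    have "(z, al z) \<in> Rel" unfolding Rel_def using that by blast
    moreover have "(al z, partnerA sg ov (al z)) \<in> Rel" unfolding Rel_def using al_in[OF that] by blast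
    moreover have "partnerA sg ov (al z) = stT PP z" unfolding stT_def using partnerA_eq that by simp
    ultimately show ?thesis by (metis rtrancl.rtrancl_into_rtrancl r_into_rtrancl)
  qed
  have it: "(w, (stT PP ^^ n) w) \<in> Rel\<^sup>*" for n
  proof (induction n)
    case 0 then show ?case by simp
  next
    case (Suc n)
    have "(stT PP ^^ n) w \<in> H" using po_funpow_in[OF perm_stT w] .
    then show ?case using Suc stp by (metis funpow.simps(2) comp_apply rtrancl_trans)
  qed
  have XR: "X \<subseteq> Rel\<^sup>* `` {w}" unfolding X_def ld_orbit_def using it by blast
  moreover have "al ` X \<subseteq> Rel\<^sup>* `` {w}"
  proof
    fix z assume "z \<in> al ` X"
    then obtain y where y: "y \<in> X" "z = al y" by blast
    have yH: "y \<in> H" using y XH by blast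
    have "(y, al y) \<in> Rel" unfolding Rel_def using yH by blast
    moreover have "(w, y) \<in> Rel\<^sup>*" using XR y by blast
    ultimately show "z \<in> Rel\<^sup>* `` {w}" using y by (metis Image_singleton_iff rtrancl.rtrancl_into_rtrancl)
  qed
  ultimately show "X \<union> al ` X \<subseteq> Rel\<^sup>* `` {w}" by blast
qed

definition Phi :: "'d set \<Rightarrow> 'd set" where "Phi X = X \<union> al ` X"

lemma alal_img: "Y \<subseteq> H \<Longrightarrow> al ` al ` Y = Y"
proof -
  assume Y: "Y \<subseteq> H"
  have "al ` al ` Y = (al \<circ> al) ` Y" by (simp add: image_comp)
  also have "\<dots> = Y"
  proof
    show "(al \<circ> al) ` Y \<subseteq> Y" using Y by auto
    show "Y \<subseteq> (al \<circ> al) ` Y"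
    proof
      fix y assume "y \<in> Y"
      then have "(al \<circ> al) y = y" using Y by auto
      then show "y \<in> (al \<circ> al) ` Y" using \<open>y \<in> Y\<close> by (metis imageI)
    qed
  qed
  finally show ?thesis .
qed

lemma circles_eq: "allA_circles H sg al ov = Phi ` (ld_orbit (stT PP) ` Wc b)"
proof -
  have "H // Rel\<^sup>* = (\<lambda>x. Rel\<^sup>* `` {x}) ` H" unfolding quotient_def by blast
  also have "\<dots> = Phi ` (ld_orbit (stT PP) ` Wc b)"
  proof
    show "(\<lambda>x. Rel\<^sup>* `` {x}) ` H \<subseteq> Phi ` (ld_orbit (stT PP) ` Wc b)"
    proof
      fix C assume "C \<in> (\<lambda>x. Rel\<^sup>* `` {x}) ` H"
      then obtain x where x: "x \<in> H" "C = Rel\<^sup>* `` {x}" by blast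
      have Cx: "C = Phi (ld_orbit (stT PP) x)" unfolding Phi_def using class_eq[OF x(1)] x(2) by simp
      show "C \<in> Phi ` (ld_orbit (stT PP) ` Wc b)"
      proof (cases "sh x = b")
        case True
        then have "x \<in> Wc b" unfolding Wc_def using x by simp
        then show ?thesis using Cx by blast
      next
        case False
        then have ax: "al x \<in> Wc b" unfolding Wc_def using x by simp
        have sub: "ld_orbit (stT PP) x \<subseteq> H" using ld_orbit_sub[OF perm_stT x(1)] .
        have "Phi (ld_orbit (stT PP) (al x)) = Phi (ld_orbit (stT PP) x)"
          unfolding Phi_def orb_al[OF x(1)] alal_img[OF sub] by blast
        then show ?thesis using Cx ax by (metis imageI)
      qed
    qed
    show "Phi ` (ld_orbit (stT PP) ` Wc b) \<subseteq> (\<lambda>x. Rel\<^sup>* `` {x}) ` H"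
    proof
      fix C assume "C \<in> Phi ` (ld_orbit (stT PP) ` Wc b)"
      then obtain x where x: "x \<in> Wc b" "C = Phi (ld_orbit (stT PP) x)" by blast
      have xH: "x \<in> H" using x Wc_sub by blast
      have "C = Rel\<^sup>* `` {x}" unfolding x(2) Phi_def using class_eq[OF xH] by simp
      then show "C \<in> (\<lambda>x. Rel\<^sup>* `` {x}) ` H" using xH by blast
    qed
  qed
  finally show ?thesis unfolding circles_def' .
qed

lemma orbW: "x \<in> Wc b \<Longrightarrow> ld_orbit (stT T) x \<subseteq> Wc b"
  using ld_orbit_sub[OF perm_stT_W] .

lemma Phi_W: "X \<subseteq> Wc b \<Longrightarrow> Phi X \<inter> Wc b = X"
  unfolding Phi_def Wc_def by auto

lemma circ_count:
  assumes R: "R \<subseteq> Wc b"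
  shows "card {C \<in> allA_circles H sg al ov. C \<inter> R = {}} =
         card {X \<in> ld_orbit (stT PP) ` Wc b. X \<inter> R = {}}"
proof -
  define Orb where "Orb = ld_orbit (stT PP) ` Wc b"
  have OW: "X \<subseteq> Wc b" if "X \<in> Orb" for X using that orbW unfolding Orb_def by blast
  have PR: "Phi X \<inter> R = X \<inter> R" if "X \<in> Orb" for X
    using Phi_W[OF OW[OF that]] R by blast
  have eq: "{C \<in> allA_circles H sg al ov. C \<inter> R = {}} = Phi ` {X \<in> Orb. X \<inter> R = {}}"
    unfolding circles_eq[of b] Orb_def[symmetric] using PR by auto
  have inj: "inj_on Phi {X \<in> Orb. X \<inter> R = {}}"
  proof (rule inj_onI)
    fix X Y assume "X \<in> {X \<in> Orb. X \<inter> R = {}}" "Y \<in> {X \<in> Orb. X \<inter> R = {}}" "Phi X = Phi Y"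
    then show "X = Y" using Phi_W OW by (metis (no_types, lifting) mem_Collect_eq)
  qed
  show ?thesis using eq card_image[OF inj] unfolding Orb_def by simp
qed

end





context LD
begin

lemma ribbon_eq:
  assumes ou: "ou \<in> H"
  shows "ribbon_faces H sg al ov sh ou S = cc (\<not> sh ou) (TT S)"
proof -
  define b where "b = (\<not> sh ou)"
  define R where "R = rsub H sg al sh ou S"
  define q where "q = stT (TT S)"
  have RW: "R \<subseteq> Wc b" unfolding R_def b_def by (rule rsub_sub)
  have q: "perm_on q (Wc b)" unfolding q_def by (rule perm_stT_W)
  have o1: "ld_orbit (rrot H sg al ov sh ou S \<circ> redge H sg al ov sh ou) d = ld_orbit (fret q R) d"
    if d: "d \<in> R" for d
  proof -
    have "ld_orbit (fret q R) d = ld_orbit (rrot H sg al ov sh ou S \<circ> redge H sg al ov sh ou) d"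
    proof (rule orbit_cong_set[OF d])
      show "\<forall>z\<in>R. fret q R z \<in> R" using fret_basic(1)[OF q RW] by blast
      show "\<forall>z\<in>R. fret q R z = (rrot H sg al ov sh ou S \<circ> redge H sg al ov sh ou) z"
        using rrot_eq unfolding R_def q_def by simp
    qed
    then show ?thesis by simp
  qed
  have c1: "card (ld_orbit (rrot H sg al ov sh ou S \<circ> redge H sg al ov sh ou) ` R)
      = card {X \<in> ld_orbit q ` Wc b. X \<inter> R \<noteq> {}}"
  proof -
    have "ld_orbit (rrot H sg al ov sh ou S \<circ> redge H sg al ov sh ou) ` R = ld_orbit (fret q R) ` R"
      using o1 by (metis (no_types, lifting) image_cong)
    then show ?thesis using fret_count[OF q RW] by simp
  qed
  have agreeW: "stT PP z = q z" if "z \<in> Wc b" "z \<notin> R" for z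
  proof -
    have zH: "z \<in> H" using that(1) Wc_sub by blast
    have "stT (TT S) z = stepA sg al ov z"
      using st_notin_R[of z ou S] that unfolding R_def b_def by blast
    then show ?thesis using stepA_eq[OF zH] unfolding q_def by simp
  qed
  have eq2: "{X \<in> ld_orbit (stT PP) ` Wc b. X \<inter> R = {}} = {X \<in> ld_orbit q ` Wc b. X \<inter> R = {}}"
  proof
    show "{X \<in> ld_orbit (stT PP) ` Wc b. X \<inter> R = {}} \<subseteq> {X \<in> ld_orbit q ` Wc b. X \<inter> R = {}}"
    proof
      fix X assume "X \<in> {X \<in> ld_orbit (stT PP) ` Wc b. X \<inter> R = {}}"
      then obtain w where w: "w \<in> Wc b" "X = ld_orbit (stT PP) w" "X \<inter> R = {}" by blast
      have XW: "X \<subseteq> Wc b" using orbW[OF w(1)] w(2) by simp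
      have "\<forall>z\<in>ld_orbit (stT PP) w. stT PP z = q z"
      proof
        fix z assume z: "z \<in> ld_orbit (stT PP) w"
        have "z \<in> Wc b" "z \<notin> R" using z XW w by blast+
        then show "stT PP z = q z" by (rule agreeW)
      qed
      then have "X = ld_orbit q w" using orbit_cong_agree w(2) by metis
      then show "X \<in> {X \<in> ld_orbit q ` Wc b. X \<inter> R = {}}" using w by blast
    qed
    show "{X \<in> ld_orbit q ` Wc b. X \<inter> R = {}} \<subseteq> {X \<in> ld_orbit (stT PP) ` Wc b. X \<inter> R = {}}"
    proof
      fix X assume "X \<in> {X \<in> ld_orbit q ` Wc b. X \<inter> R = {}}"
      then obtain w where w: "w \<in> Wc b" "X = ld_orbit q w" "X \<inter> R = {}" by blast
      have XW: "X \<subseteq> Wc b" using orbW[OF w(1)] w(2) unfolding q_def by simp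
      have "\<forall>z\<in>ld_orbit q w. q z = stT PP z"
      proof
        fix z assume z: "z \<in> ld_orbit q w"
        have "z \<in> Wc b" "z \<notin> R" using z XW w by blast+
        then show "q z = stT PP z" using agreeW by simp
      qed
      then have "X = ld_orbit (stT PP) w" using orbit_cong_agree w(2) by metis
      then show "X \<in> {X \<in> ld_orbit (stT PP) ` Wc b. X \<inter> R = {}}" using w by blast
    qed
  qed
  have c2: "card {C \<in> allA_circles H sg al ov. C \<inter> R = {}} = card {X \<in> ld_orbit q ` Wc b. X \<inter> R = {}}"
    using circ_count[OF RW] eq2 by simp
  have finO: "finite (ld_orbit q ` Wc b)" using q unfolding perm_on_def by simp
  have "card {X \<in> ld_orbit q ` Wc b. X \<inter> R \<noteq> {}} + card {X \<in> ld_orbit q ` Wc b. X \<inter> R = {}}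
      = card (ld_orbit q ` Wc b)"
  proof -
    have "ld_orbit q ` Wc b = {X \<in> ld_orbit q ` Wc b. X \<inter> R \<noteq> {}} \<union> {X \<in> ld_orbit q ` Wc b. X \<inter> R = {}}"
      by blast
    moreover have "{X \<in> ld_orbit q ` Wc b. X \<inter> R \<noteq> {}} \<inter> {X \<in> ld_orbit q ` Wc b. X \<inter> R = {}} = {}"
      by blast
    ultimately show ?thesis using finO by (metis (no_types, lifting) card_Un_disjoint finite_Un)
  qed
  then show ?thesis unfolding ribbon_faces_def cc_def using c1 c2
    unfolding R_def[symmetric] q_def[symmetric] b_def[symmetric] by simp
qed

lemma tc_iff: "tait_connected H sg al sh T \<longleftrightarrow> (\<forall>u\<in>TV. \<forall>v\<in>TV. (u, v) \<in> (tE T)\<^sup>*)"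
  unfolding tait_connected_def tE_def ..

lemma conn_kk: "tait_connected H sg al sh T \<longleftrightarrow> kk T = 1"
  unfolding tc_iff kk_def using comps_one_iff[OF sym_tE TV_ne] by simp

lemma kk_step:
  assumes e: "e \<in> crossings H sg"
  shows "kk T \<le> kk (insert e T) + 1"
proof -
  obtain y where y: "y \<in> H" "e = cr y" using e crossings_eq by blast
  have endse: "ends e = {shf y, shf (sg (sg y))}" using ends_cr[OF y(1)] y(2) by simp
  have tEi: "tE (insert e T) = tE T \<union> {shf y, shf (sg (sg y))} \<times> {shf y, shf (sg (sg y))}"
    using tE_insert endse by simp
  show ?thesis
  proof (cases "(shf y, shf (sg (sg y))) \<in> (tE T)\<^sup>*")
    case True
    then show ?thesis unfolding kk_def tEi comps_def comps_same[OF sym_tE True] by simp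
  next
    case False
    have uv: "shf y \<in> TV" "shf (sg (sg y)) \<in> TV" using shf_TV y(1) by auto
    show ?thesis unfolding kk_def tEi using comps_merge[OF TV_fin sym_tE uv False] by simp
  qed
qed

lemma kk_lower:
  assumes "finite T" "T \<subseteq> crossings H sg"
  shows "card TV \<le> kk T + card T"
  using assms
proof (induction T rule: finite_induct)
  case empty then show ?case using kk_empty by simp
next
  case (insert e T)
  then show ?case using kk_step[of e T] by simp
qed

lemma kk_pos: "1 \<le> kk T"
  unfolding kk_def using comps_ge1[OF TV_fin TV_ne] .

lemma spanning_iff:
  assumes T: "T \<subseteq> crossings H sg"
  shows "tait_spanning_tree H sg al sh T \<longleftrightarrow> kk T = 1 \<and> card T + 1 = card TV"
proof -
  have finT: "finite T" using T crossings_fin finite_subset by blast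
  show ?thesis
  proof
    assume sp: "tait_spanning_tree H sg al sh T"
    have conn: "kk T = 1" using sp conn_kk unfolding tait_spanning_tree_def by blast
    have br: "\<forall>e\<in>T. \<not> tait_connected H sg al sh (T - {e})" using sp unfolding tait_spanning_tree_def by blast
    have "T' \<subseteq> T \<longrightarrow> kk T' + card T' = card TV" if fT': "finite T'" for T'
      using fT'
    proof (induction T' rule: finite_induct)
      case empty then show ?case using kk_empty by simp
    next
      case (insert e T')
      show ?case
      proof
        assume sub: "insert e T' \<subseteq> T"
        then have eT: "e \<in> T" and T'T: "T' \<subseteq> T - {e}" using insert by auto
        have ecr: "e \<in> crossings H sg" using eT T by blast
        obtain y where y: "y \<in> H" "e = cr y" using ecr crossings_eq by blast
        have endse: "ends e = {shf y, shf (sg (sg y))}" using ends_cr[OF y(1)] y(2) by simp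
        have nc: "(shf y, shf (sg (sg y))) \<notin> (tE T')\<^sup>*"
        proof
          assume c: "(shf y, shf (sg (sg y))) \<in> (tE T')\<^sup>*"
          have "tE T' \<subseteq> tE (T - {e})" using T'T unfolding tE_def by blast
          then have c2: "(shf y, shf (sg (sg y))) \<in> (tE (T - {e}))\<^sup>*" using c rtrancl_mono by blast
          have "tE T = tE (T - {e}) \<union> {shf y, shf (sg (sg y))} \<times> {shf y, shf (sg (sg y))}"
            using tE_insert[of e "T - {e}"] endse eT by (metis insert_Diff)
          then have "(tE T)\<^sup>* = (tE (T - {e}))\<^sup>*" using comps_same[OF sym_tE c2] by simp
          then have "kk (T - {e}) = 1" using conn unfolding kk_def comps_def by simp
          then show False using br eT conn_kk by blast
        qed
        have tEi: "tE (insert e T') = tE T' \<union> {shf y, shf (sg (sg y))} \<times> {shf y, shf (sg (sg y))}"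
          using tE_insert endse by simp
        have uv: "shf y \<in> TV" "shf (sg (sg y)) \<in> TV" using shf_TV y(1) by auto
        have "kk (insert e T') + 1 = kk T'"
          unfolding kk_def tEi using comps_merge[OF TV_fin sym_tE uv nc] .
        moreover have "kk T' + card T' = card TV" using insert sub by blast
        ultimately show "kk (insert e T') + card (insert e T') = card TV" using insert by simp
      qed
    qed
    then have "kk T + card T = card TV" using finT by blast
    then show "kk T = 1 \<and> card T + 1 = card TV" using conn by simp
  next
    assume a: "kk T = 1 \<and> card T + 1 = card TV"
    have conn: "tait_connected H sg al sh T" using a conn_kk by simp
    have "\<not> tait_connected H sg al sh (T - {e})" if e: "e \<in> T" for e
    proof
      assume "tait_connected H sg al sh (T - {e})"
      then have k1: "kk (T - {e}) = 1" using conn_kk by simp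
      have "card TV \<le> kk (T - {e}) + card (T - {e})" using kk_lower finT T by blast
      moreover have "card (T - {e}) + 1 = card T"
      proof -
        have "0 < card T" using e finT card_gt_0_iff by blast
        then show ?thesis using e finT by (simp add: card_Diff_singleton)
      qed
      ultimately show False using k1 a by simp
    qed
    then show "tait_spanning_tree H sg al sh T" unfolding tait_spanning_tree_def using T conn by blast
  qed
qed

lemma TT_sub: "Q \<subseteq> crossings H sg \<Longrightarrow> TT Q \<subseteq> crossings H sg"
  unfolding TT_def PP_def by blast

lemma TT_TT: "TT (TT Q) = Q" unfolding TT_def by blast

lemma quasi_iff:
  assumes ou: "ou \<in> H"
  shows "quasi_tree H sg al ov sh ou Q \<longleftrightarrow> Q \<subseteq> crossings H sg \<and> tait_spanning_tree H sg al sh (TT Q)"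
proof (cases "Q \<subseteq> crossings H sg")
  case False
  then show ?thesis unfolding quasi_tree_def by blast
next
  case True
  have T: "TT Q \<subseteq> crossings H sg" using TT_sub[OF True] .
  have finT: "finite (TT Q)" using T crossings_fin finite_subset by blast
  have f: "int (cc (\<not> sh ou) (TT Q)) = 2 * int (kk (TT Q)) + int (card (TT Q)) - int (card TV)"
    using cc_formula[OF T] .
  have lb: "card TV \<le> kk (TT Q) + card (TT Q)" using kk_lower[OF finT T] .
  have k1: "1 \<le> kk (TT Q)" using kk_pos .
  have "ribbon_faces H sg al ov sh ou Q = 1 \<longleftrightarrow> kk (TT Q) = 1 \<and> card (TT Q) + 1 = card TV"
    using ribbon_eq[OF ou, of Q] f lb k1 by linarith
  then show ?thesis unfolding quasi_tree_def using True spanning_iff[OF T] by blast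
qed

lemma spanning_sub: "tait_spanning_tree H sg al sh T \<Longrightarrow> T \<subseteq> crossings H sg"
  unfolding tait_spanning_tree_def by blast

end

theorem theorem1:
  fixes H :: "'d set" and sg al :: "'d \<Rightarrow> 'd" and ov sh :: "'d \<Rightarrow> bool" and ou :: 'd
  assumes "link_diagram H sg al ov"
    and "ou \<in> H"
    and "checkerboard H sg al sh"
    and "E_plus H sg ov sh \<ge> E_minus H sg ov sh"
  shows "\<exists>f. bij_betw f {Q. quasi_tree H sg al ov sh ou Q} {T. tait_spanning_tree H sg al sh T} \<and>
    (\<forall>Q. quasi_tree H sg al ov sh ou Q \<longrightarrow>
       real (card {c \<in> f Q. tait_positive ov sh c}) + qt_genus H sg al ov Q
       = (real (card (tait_vertices H sg al sh)) + real (E_plus H sg ov sh)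
          - real (V_ribbon H sg al ov)) / 2)"
proof -
  interpret LD H sg al ov sh using assms(1,3) by unfold_locales
  have ou: "ou \<in> H" by (rule assms(2))
  have bij: "bij_betw TT {Q. quasi_tree H sg al ov sh ou Q} {T. tait_spanning_tree H sg al sh T}"
  proof (rule bij_betw_byWitness[where f'=TT])
    show "\<forall>a\<in>{Q. quasi_tree H sg al ov sh ou Q}. TT (TT a) = a" using TT_TT by blast
    show "\<forall>a\<in>{T. tait_spanning_tree H sg al sh T}. TT (TT a) = a" using TT_TT by blast
    show "TT ` {Q. quasi_tree H sg al ov sh ou Q} \<subseteq> {T. tait_spanning_tree H sg al sh T}"
      using quasi_iff[OF ou] by blast
    show "TT ` {T. tait_spanning_tree H sg al sh T} \<subseteq> {Q. quasi_tree H sg al ov sh ou Q}"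
    proof
      fix X assume "X \<in> TT ` {T. tait_spanning_tree H sg al sh T}"
      then obtain T where T: "tait_spanning_tree H sg al sh T" "X = TT T" by blast
      have "T \<subseteq> crossings H sg" using spanning_sub[OF T(1)] .
      then have "X \<subseteq> crossings H sg" using TT_sub T(2) by simp
      moreover have "tait_spanning_tree H sg al sh (TT X)" using T TT_TT by simp
      ultimately show "X \<in> {Q. quasi_tree H sg al ov sh ou Q}" using quasi_iff[OF ou] by blast
    qed
  qed
  have formula: "real (card {c \<in> TT Q. tait_positive ov sh c}) + qt_genus H sg al ov Q
       = (real (card (tait_vertices H sg al sh)) + real (E_plus H sg ov sh)
          - real (V_ribbon H sg al ov)) / 2" if q: "quasi_tree H sg al ov sh ou Q" for Q
  proof -
    have Qc: "Q \<subseteq> crossings H sg" and sp: "tait_spanning_tree H sg al sh (TT Q)"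
      using quasi_iff[OF ou] q by blast+
    have T: "TT Q \<subseteq> crossings H sg" using TT_sub[OF Qc] .
    have cT: "card (TT Q) + 1 = card TV" using spanning_iff[OF T] sp by blast
    have PPc: "PP \<subseteq> crossings H sg" unfolding PP_def by blast
    have finP: "finite PP" using PPc crossings_fin finite_subset by blast
    have finQ: "finite Q" using Qc crossings_fin finite_subset by blast
    have pos: "{c \<in> TT Q. tait_positive ov sh c} = PP - Q"
      unfolding TT_def PP_def using Qc by blast
    have cu: "card (A \<union> B) = card A + card B" if "finite A" "finite B" "A \<inter> B = {}" for A B :: "'d set set"
      using card_Un_disjoint[OF that] .
    have c1: "card (TT Q) = card (PP - Q) + card (Q - PP)"
    proof -
      have "card ((PP - Q) \<union> (Q - PP)) = card (PP - Q) + card (Q - PP)"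
        by (rule cu) (use finP finQ in auto)
      then show ?thesis unfolding TT_def .
    qed
    have c2: "card Q = card (Q - PP) + card (Q \<inter> PP)"
    proof -
      have "card ((Q - PP) \<union> (Q \<inter> PP)) = card (Q - PP) + card (Q \<inter> PP)"
        by (rule cu) (use finP finQ in auto)
      moreover have "(Q - PP) \<union> (Q \<inter> PP) = Q" by blast
      ultimately show ?thesis by simp
    qed
    have c3: "card PP = card (PP - Q) + card (Q \<inter> PP)"
    proof -
      have "card ((PP - Q) \<union> (Q \<inter> PP)) = card (PP - Q) + card (Q \<inter> PP)"
        by (rule cu) (use finP finQ in auto)
      moreover have "(PP - Q) \<union> (Q \<inter> PP) = PP" by blast
      ultimately show ?thesis by simp
    qed
    have Ep: "E_plus H sg ov sh = card PP" unfolding E_plus_def PP_def ..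
    show ?thesis unfolding pos Ep qt_genus_def using cT c1 c2 c3 by (simp add: field_simps)
  qed
  show ?thesis using bij formula by blast
qed




end
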